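(* Let $X\subseteq\Omega$ be club in $\Omega$ with $0\notin X$, $\Theta=\Theta_X$. Let $\alpha=\Omega\tilde\alpha>0$ (a nonzero multiple of $\Omega$), $\beta<\Omega$ and $\tau=\tau(\alpha)<\Omega$. If $\alpha+\beta\in\hat\varepsilon_{\Omega+1}\cap\mathrm{JUMP}(X)$ and $(\tau_n)_{n<\omega}$ is strictly increasing with supremum $\tau$, then $\big(\Theta(\alpha[\tau_n]+\Theta^*(\alpha+\beta))\big)_{n<\omega}$ is strictly increasing with supremum $\Theta(\alpha+\beta)$.
   Context: $\Omega$ is the first uncountable ordinal; $\varepsilon_{\Omega+1}$ the least $\varepsilon>\Omega$ with $\omega^\varepsilon=\varepsilon$. Every $0<\xi<\varepsilon_{\Omega+1}$ has a unique $\Omega$-normal form $\xi=\Omega^{\alpha}\beta+\gamma$ with $0<\beta<\Omega$, $\gamma<\Omega^{\alpha}$. $C(0)=\{0\}$, $C(\Omega^\alpha\beta+\gamma)=C(\alpha)\cup C(\gamma)\cup\{\beta\}$; $\xi^*=\max C(\xi)$. For $\theta<\Omega$: $0[\theta]=1[\theta]=0$; $(\Omega^\alpha\beta+\gamma)[\theta]=\Omega^\alpha\beta+\gamma[\theta]$ if $\gamma>0$; $(\Omega^\alpha\beta)[\theta]=\Omega^\alpha\theta$ if $\beta$ is a limit; $\Omega^{\alpha+1}[\theta]=\Omega^\alpha\theta$; $(\Omega^\alpha(\beta+1))[\theta]=\Omega^\alpha\beta+(\Omega^\alpha)[\theta]$ if $\beta>0$; $\Omega^\alpha[\theta]=\Omega^{\alpha[\theta]}$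 if $\alpha$ is a limit. $\tau(0)=0$, $\tau(\zeta+1)=1$, $\tau(\Omega^\alpha\beta+\gamma)=\tau(\gamma)$ if $\gamma>0$, $\tau(\Omega^\alpha\beta)=\beta$ if $\beta$ limit, $\tau(\Omega^\alpha(\beta+1))=\tau(\alpha)$ if $\alpha$ limit, $\tau(\Omega^{\alpha+1}(\beta+1))=\Omega$. $\Theta_X(\xi)$ is the least $\theta\in X$ with $\theta>\xi^*$ such that all $\zeta<\xi$ with $\zeta^*<\theta$ have $\Theta_X(\zeta)<\theta$. $\Omega_0=1$, $\Omega_{n+1}=\Omega^{\Omega_n}$, $\Theta_X(\varepsilon_{\Omega+1})=\sup_n\Theta_X(\Omega_n)$, $\hat\varepsilon_{\Omega+1}=\{\xi<\varepsilon_{\Omega+1}:\xi^*<\Theta_X(\varepsilon_{\Omega+1})\}$. $\mathrm{FIX}(X)$ is the set of $\xi$ with $(\xi[1])^*<\xi^*=\tau(\xi)=\Theta_X(\gamma)$ for some $\gamma>\xi$; $\mathrm{JUMP}(X)=\{0\}\cup\{\text{successors}\}\cup\mathrm{FIX}(X)$; $\Theta^*(\xi)=\Theta_X(\zeta)$ if $\xi=\zeta+1$, $\tau(\xi)$ if $\xi\in\mathrm{FIX}(X)$, and $0$ otherwise. *)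

theory Defs
  imports Main "HOL-Library.Countable_Set"
begin

text \<open>Ordinals below Omega are modelled by the elements of a well-ordered type 'w
  which is uncountable but all of whose proper initial segments are countable
  (so 'w has order type omega_1).\<close>

definition omega1_like :: "'w::wellorder itself \<Rightarrow> bool" where
  "omega1_like _ \<longleftrightarrow> uncountable (UNIV :: 'w set) \<and> (\<forall>x::'w. countable {..<x})"

definition w0 :: "'w::wellorder" where "w0 = (LEAST x. True)"
definition wsucc :: "'w::wellorder \<Rightarrow> 'w" where "wsucc b = (LEAST c. b < c)"
definition w1 :: "'w::wellorder" where "w1 = wsucc w0"
definition wpred :: "'w::wellorder \<Rightarrow> 'w" where "wpred b = (THE c. b = wsucc c)"
definition wlimit :: "'w::wellorder \<Rightarrow> bool" where
  "wlimit b \<longleftrightarrow> b \<noteq> w0 \<and> \<not> (\<exists>c. b = wsucc c)"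

definition wadd :: "'w::wellorder \<Rightarrow> 'w \<Rightarrow> 'w" where
  "wadd a b = (THE c. a \<le> c \<and> (\<exists>f. strict_mono_on {..<b} f \<and> f ` {..<b} = {a..<c}))"

definition wsup :: "'w::wellorder set \<Rightarrow> 'w" where
  "wsup S = (LEAST s. \<forall>x\<in>S. x \<le> s)"

text \<open>T [(a1,b1),...,(ak,bk)] denotes Omega^a1 * b1 + ... + Omega^ak * bk.\<close>
datatype 'w tm = T "('w tm \<times> 'w) list"

primrec untm :: "'w tm \<Rightarrow> ('w tm \<times> 'w) list" where "untm (T xs) = xs"

fun lt :: "'w::wellorder tm \<Rightarrow> 'w tm \<Rightarrow> bool" where
  "lt (T []) (T []) = False"
| "lt (T []) (T (y#ys)) = True"
| "lt (T (x#xs)) (T []) = False"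
| "lt (T ((a,b)#xs)) (T ((c,d)#ys)) =
     (lt a c \<or> (a = c \<and> (b < d \<or> (b = d \<and> lt (T xs) (T ys)))))"

fun nf :: "'w::wellorder tm \<Rightarrow> bool" where
  "nf (T []) = True"
| "nf (T ((a,b)#xs)) = (nf a \<and> b \<noteq> w0 \<and> nf (T xs) \<and>
      (case xs of [] \<Rightarrow> True | (c,d)#_ \<Rightarrow> lt c a))"

definition cw :: "'w::wellorder \<Rightarrow> 'w tm" where
  "cw b = (if b = w0 then T [] else T [(T [], b)])"

definition one :: "'w::wellorder tm" where "one = T [(T [], w1)]"
definition Omega :: "'w::wellorder tm" where "Omega = T [(one, w1)]"

definition mono :: "'w::wellorder tm \<Rightarrow> 'w \<Rightarrow> 'w tm" where
  "mono a b = (if b = w0 then T [] else T [(a, b)])"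

text \<open>xi + delta for delta < Omega.\<close>
fun tadd :: "'w::wellorder tm \<Rightarrow> 'w \<Rightarrow> 'w tm" where
  "tadd (T xs) d = (if d = w0 then T xs
     else if xs \<noteq> [] \<and> fst (last xs) = T [] then T (butlast xs @ [(T [], wadd (snd (last xs)) d)])
     else T (xs @ [(T [], d)]))"

definition tsucc :: "'w::wellorder tm \<Rightarrow> bool" where
  "tsucc a \<longleftrightarrow> (\<exists>z. nf z \<and> a = tadd z w1)"
definition tpred :: "'w::wellorder tm \<Rightarrow> 'w tm" where
  "tpred a = (THE z. nf z \<and> a = tadd z w1)"

fun Cs :: "'w::wellorder tm \<Rightarrow> 'w set" where
  "Cs (T []) = {w0}"
| "Cs (T ((a,b)#xs)) = Cs a \<union> Cs (T xs) \<union> {b}"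

definition star :: "'w::wellorder tm \<Rightarrow> 'w" where "star x = Max (Cs x)"

fun fs :: "'w::wellorder tm \<Rightarrow> 'w \<Rightarrow> 'w tm" where
  "fs (T []) \<theta> = T []"
| "fs (T [(a,b)]) \<theta> =
     (let p = (if a = T [] then T []
               else if tsucc a then mono (tpred a) \<theta>
               else T [(fs a \<theta>, w1)])
      in if wlimit b then mono a \<theta>
         else if b = w1 then p
         else T ((a, wpred b) # untm p))"
| "fs (T ((a,b)#x#xs)) \<theta> = T ((a,b) # untm (fs (T (x#xs)) \<theta>))"

fun tau :: "'w::wellorder tm \<Rightarrow> 'w tm" where
  "tau (T []) = T []"
| "tau (T [(a,b)]) =
     (if wlimit b then cw b
      else if a = T [] then one
      else if tsucc a then Omega
      else tau a)"
| "tau (T ((a,b)#x#xs)) = tau (T (x#xs))"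

definition to_w :: "'w::wellorder tm \<Rightarrow> 'w" where
  "to_w t = (if t = T [] then w0 else snd (hd (untm t)))"

definition tmrel :: "('w::wellorder tm \<times> 'w tm) set" where
  "tmrel = {(z, x). nf z \<and> nf x \<and> lt z x}"

definition Theta :: "'w::wellorder set \<Rightarrow> 'w tm \<Rightarrow> 'w" where
  "Theta X = wfrec tmrel (\<lambda>f x. LEAST \<theta>. \<theta> \<in> X \<and> star x < \<theta> \<and>
      (\<forall>z. nf z \<and> lt z x \<and> star z < \<theta> \<longrightarrow> f z < \<theta>))"

primrec Om :: "nat \<Rightarrow> 'w::wellorder tm" where
  "Om 0 = one"
| "Om (Suc n) = T [(Om n, w1)]"

definition ThetaEps :: "'w::wellorder set \<Rightarrow> 'w" where
  "ThetaEps X = wsup (range (\<lambda>n. Theta X (Om n)))"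

definition hatEps :: "'w::wellorder set \<Rightarrow> 'w tm set" where
  "hatEps X = {x. nf x \<and> star x < ThetaEps X}"

definition FIX :: "'w::wellorder set \<Rightarrow> 'w tm set" where
  "FIX X = {x. nf x \<and> star (fs x w1) < star x \<and> tau x = cw (star x) \<and>
              (\<exists>g. nf g \<and> lt x g \<and> Theta X g = star x)}"

definition JUMP :: "'w::wellorder set \<Rightarrow> 'w tm set" where
  "JUMP X = {x. nf x \<and> (x = T [] \<or> tsucc x \<or> x \<in> FIX X)}"

definition ThetaStar :: "'w::wellorder set \<Rightarrow> 'w tm \<Rightarrow> 'w" where
  "ThetaStar X x = (if tsucc x then Theta X (tpred x)
                    else if x \<in> FIX X then to_w (tau x) else w0)"

definition club :: "'w::wellorder set \<Rightarrow> bool" where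
  "club X \<longleftrightarrow> (\<forall>a. \<exists>x\<in>X. a < x) \<and>
     (\<forall>a. wlimit a \<and> (\<forall>b<a. \<exists>x\<in>X. b < x \<and> x < a) \<longrightarrow> a \<in> X)"

end

theory Submission
  imports Defs
begin


lemma w0_le[simp]: "(w0::'w::wellorder) \<le> x"
  unfolding w0_def by (rule Least_le) simp

lemma not_less_w0[simp]: "\<not> (x::'w::wellorder) < w0"
  using w0_le[of x] by (simp add: not_less)

lemma o1_bound:
  assumes "omega1_like TYPE('w::wellorder)" "countable (A::'w set)"
  shows "\<exists>h. \<forall>a\<in>A. a < h"
proof -
  have "countable (\<Union>a\<in>A. {..a})"
  proof (rule countable_UN[OF assms(2)])
    fix a :: 'w
    have "{..a} = insert a {..<a}" by auto
    moreover have "countable {..<a}" using assms(1) unfolding omega1_like_def by blast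
    ultimately show "countable {..a}" by simp
  qed
  moreover have "uncountable (UNIV::'w set)" using assms(1) unfolding omega1_like_def by blast
  ultimately obtain h where "h \<notin> (\<Union>a\<in>A. {..a})" by (metis UNIV_eq_I)
  then show ?thesis by (auto simp: not_le)
qed

lemma wsucc_gt:
  assumes "omega1_like TYPE('w::wellorder)"
  shows "(b::'w) < wsucc b"
proof -
  obtain h where "\<forall>a\<in>{b}. a < h" using o1_bound[OF assms, of "{b}"] by auto
  then have "b < h" by simp
  then show ?thesis unfolding wsucc_def by (rule LeastI)
qed

lemma wsucc_le: "(b::'w::wellorder) < c \<Longrightarrow> wsucc b \<le> c"
  unfolding wsucc_def by (rule Least_le)

lemma less_wsucc_iff:
  assumes "omega1_like TYPE('w::wellorder)"
  shows "((c::'w) < wsucc b) = (c \<le> b)"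
  using wsucc_gt[OF assms, of b] wsucc_le[of b c]
  by (metis leD le_less_trans linorder_le_less_linear)

lemma wsucc_mono:
  assumes "omega1_like TYPE('w::wellorder)"
  shows "((wsucc b::'w) < wsucc c) = (b < c)"
  using less_wsucc_iff[OF assms] wsucc_gt[OF assms]
  by (metis leD le_less_trans linorder_le_less_linear)

lemma wsucc_inj:
  assumes "omega1_like TYPE('w::wellorder)"
  shows "((wsucc b::'w) = wsucc c) = (b = c)"
  using wsucc_mono[OF assms, of b c] wsucc_mono[OF assms, of c b]
  by (metis less_irrefl linorder_neqE)

lemma wpred_wsucc:
  assumes "omega1_like TYPE('w::wellorder)"
  shows "wpred (wsucc c::'w) = c"
  unfolding wpred_def using wsucc_inj[OF assms] by auto

lemma w0_less_w1:
  assumes "omega1_like TYPE('w::wellorder)"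
  shows "(w0::'w) < w1"
  unfolding w1_def using wsucc_gt[OF assms] .

lemma w1_le_iff:
  assumes "omega1_like TYPE('w::wellorder)"
  shows "(w1 \<le> (x::'w)) = (x \<noteq> w0)"
  using less_wsucc_iff[OF assms, of x w0] unfolding w1_def
  by (metis antisym_conv1 leD le_less_linear w0_le)

lemma wlimit_wsucc_less:
  assumes "omega1_like TYPE('w::wellorder)" "wlimit b" "(e::'w) < b"
  shows "wsucc e < b"
  using wsucc_le[OF assms(3)] assms(2) unfolding wlimit_def
  by (metis le_less)

lemma nonlimit_cases:
  "(b::'w::wellorder) \<noteq> w0 \<Longrightarrow> \<not> wlimit b \<Longrightarrow> \<exists>c. b = wsucc c"
  unfolding wlimit_def by blast

lemma wsup_seq:
  assumes o: "omega1_like TYPE('w::wellorder)" and sm: "strict_mono (u::nat \<Rightarrow> 'w)"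
  shows "\<forall>n. u n < wsup (range u)"
    and "\<forall>b. b < wsup (range u) \<longrightarrow> (\<exists>n. b < u n)"
    and "wlimit (wsup (range u))"
    and "\<forall>h. (\<forall>n. u n \<le> h) \<longrightarrow> wsup (range u) \<le> h"
proof -
  obtain h where h: "\<forall>a\<in>range u. a < h" using o1_bound[OF o, of "range u"] by auto
  let ?s = "wsup (range u)"
  have ub: "\<forall>x\<in>range u. x \<le> ?s" unfolding wsup_def
    by (rule LeastI[of _ h]) (use h in \<open>auto intro: less_imp_le\<close>)
  have lub: "\<And>h. (\<forall>n. u n \<le> h) \<Longrightarrow> ?s \<le> h" unfolding wsup_def
    by (rule Least_le) auto
  show 1: "\<forall>n. u n < ?s"
  proof
    fix n
    have "u n < u (Suc n)" using sm by (simp add: strict_mono_def)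
    also have "\<dots> \<le> ?s" using ub by auto
    finally show "u n < ?s" .
  qed
  show 2: "\<forall>b. b < ?s \<longrightarrow> (\<exists>n. b < u n)"
    using lub by (meson leD le_less_linear)
  show "\<forall>h. (\<forall>n. u n \<le> h) \<longrightarrow> ?s \<le> h" using lub by blast
  show "wlimit ?s" unfolding wlimit_def
  proof (intro conjI notI)
    assume "?s = w0" then show False using 1 by (metis not_less_w0)
  next
    assume "\<exists>c. ?s = wsucc c"
    then obtain c where c: "?s = wsucc c" by blast
    have "c < ?s" using c wsucc_gt[OF o] by simp
    then obtain n where "c < u n" using 2 by blast
    then have "wsucc c \<le> u n" by (rule wsucc_le)
    then show False using 1 c by (metis leD)
  qed
qed


lemma wadd_unique_aux:
  fixes f g :: "'w::wellorder \<Rightarrow> 'w"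
  assumes f: "strict_mono_on {..<b} f" "f ` {..<b} = {a..<c}"
    and g: "strict_mono_on {..<b} g" "g ` {..<b} = {a..<c'}"
  shows "y < b \<Longrightarrow> f y = g y"
proof (induction y rule: less_induct)
  case (less y)
  show ?case
  proof (rule ccontr)
    assume ne: "f y \<noteq> g y"
    {
      fix f g :: "'w \<Rightarrow> 'w" and c c'
      assume f: "strict_mono_on {..<b} f" "f ` {..<b} = {a..<c}"
        and g: "strict_mono_on {..<b} g" "g ` {..<b} = {a..<c'}"
        and IH: "\<And>z. z < y \<Longrightarrow> f z = g z" and lt: "f y < g y"
      have "f y \<in> {a..<c}" using f(2) less(2) by blast
      moreover have "g y \<in> {a..<c'}" using g(2) less(2) by blast
      ultimately have "f y \<in> {a..<c'}" using lt by auto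
      then obtain z where z: "z < b" "g z = f y" using g(2) by (metis imageE lessThan_iff)
      have False
      proof (cases "z < y")
        case True
        then have "f z < f y" using f(1) less(2) z(1) by (auto intro: strict_mono_onD)
        then show False using IH[OF True] z by simp
      next
        case False
        then have "g y \<le> g z"
          using g(1) less(2) z(1) by (metis le_less lessThan_iff not_le strict_mono_onD)
        then show False using z lt by simp
      qed
    }
    note * = this
    show False
    proof (cases "f y < g y")
      case True
      show False by (rule *[OF f g]) (use less True in auto)
    next
      case False
      then have "g y < f y" using ne by auto
      show False by (rule *[OF g f]) (use less \<open>g y < f y\<close> in \<open>auto\<close>)
    qed
  qed
qed

lemma wadd_unique:
  fixes f g :: "'w::wellorder \<Rightarrow> 'w"
  assumes f: "strict_mono_on {..<b} f" "f ` {..<b} = {a..<c}" "a \<le> c"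
    and g: "strict_mono_on {..<b} g" "g ` {..<b} = {a..<c'}" "a \<le> c'"
  shows "c = c'"
proof -
  have "f ` {..<b} = g ` {..<b}"
    using wadd_unique_aux[OF f(1,2) g(1,2)] by (auto intro: image_cong)
  then have e: "{a..<c} = {a..<c'}" using f g by simp
  show ?thesis
  proof (rule ccontr)
    assume "c \<noteq> c'"
    then have "c < c' \<or> c' < c" by auto
    then show False using e f(3) g(3) by (metis atLeastLessThan_iff less_irrefl)
  qed
qed

lemma wadd_eq:
  fixes f :: "'w::wellorder \<Rightarrow> 'w"
  assumes "strict_mono_on {..<b} f" "f ` {..<b} = {a..<c}" "a \<le> c"
  shows "wadd a b = c"
  unfolding wadd_def
proof (rule the_equality)
  show "a \<le> c \<and> (\<exists>f. strict_mono_on {..<b} f \<and> f ` {..<b} = {a..<c})" using assms by blast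
next
  fix c' assume "a \<le> c' \<and> (\<exists>f. strict_mono_on {..<b} f \<and> f ` {..<b} = {a..<c'})"
  then obtain g where "a \<le> c'" "strict_mono_on {..<b} g" "g ` {..<b} = {a..<c'}" by blast
  then show "c' = c" using wadd_unique[OF _ _ _ assms] by blast
qed

lemma lessThan_w1:
  assumes "omega1_like TYPE('w::wellorder)"
  shows "{..<w1} = {w0::'w}"
  using less_wsucc_iff[OF assms] unfolding w1_def by (auto simp: antisym)

lemma sm_w1:
  assumes o: "omega1_like TYPE('w::wellorder)"
  shows "strict_mono_on {..<(w1::'w)} (\<lambda>_. c::'w)"
  apply (subst lessThan_w1[OF o])
  apply (simp add: strict_mono_on_def)
  done

lemma wadd_w1:
  assumes o: "omega1_like TYPE('w::wellorder)"
  shows "wadd (c::'w) w1 = wsucc c"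
proof (rule wadd_eq[where f="\<lambda>_. c"])
  show "strict_mono_on {..<(w1::'w)} (\<lambda>_. c)"
    by (rule sm_w1[OF o])
  show "(\<lambda>_. c) ` {..<(w1::'w)} = {c..<wsucc c}" unfolding lessThan_w1[OF o]
    using less_wsucc_iff[OF o] by (auto simp: antisym)
  show "c \<le> wsucc c" using wsucc_gt[OF o] by (simp add: less_imp_le)
qed

definition om :: "'w::wellorder" where "om = (LEAST y. wlimit y)"

lemma om_limit:
  assumes o: "omega1_like TYPE('w::wellorder)"
  shows "wlimit (om::'w)"
proof -
  let ?u = "\<lambda>n. (wsucc ^^ n) (w0::'w)"
  have "strict_mono ?u" unfolding strict_mono_Suc_iff by (simp add: wsucc_gt[OF o])
  then have "wlimit (wsup (range ?u))" using wsup_seq(3)[OF o] by blast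
  then show ?thesis unfolding om_def by (rule LeastI)
qed

lemma below_om:
  assumes "(x::'w::wellorder) < om" "x \<noteq> w0"
  shows "\<exists>y. x = wsucc y"
  using assms not_less_Least[of x wlimit] unfolding om_def wlimit_def by blast

lemma wadd_w1_left:
  assumes o: "omega1_like TYPE('w::wellorder)"
  shows "wadd w1 (d::'w) = (if d < om then wsucc d else d)"
proof (rule wadd_eq[where f="\<lambda>y. if y < om then wsucc y else y"])
  have oml: "wlimit (om::'w)" by (rule om_limit[OF o])
  have sl: "\<And>y::'w. y < om \<Longrightarrow> wsucc y < om" using wlimit_wsucc_less[OF o oml] .
  have w1om: "w1 < (om::'w)" unfolding w1_def using sl oml unfolding wlimit_def
    by (metis le_less w0_le)
  show "strict_mono_on {..<d} (\<lambda>y. if y < om then wsucc y else y)"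
  proof (rule strict_mono_onI)
    fix r s :: 'w assume "r \<in> {..<d}" "s \<in> {..<d}" "r < s"
    then show "(if r < om then wsucc r else r) < (if s < om then wsucc s else s)"
      using sl wsucc_mono[OF o] wsucc_gt[OF o]
      by (auto, meson less_trans not_le le_less_trans)
  qed
  show "(\<lambda>y. if y < om then wsucc y else y) ` {..<d} = {w1..<(if d < om then wsucc d else d)}"
  proof (intro equalityI subsetI)
    fix x assume "x \<in> (\<lambda>y. if y < om then wsucc y else y) ` {..<d}"
    then obtain y where y: "y < d" "x = (if y < om then wsucc y else y)" by auto
    show "x \<in> {w1..<(if d < om then wsucc d else d)}"
    proof (cases "y < om")
      case True
      have "w0 < wsucc y" using wsucc_gt[OF o, of y] w0_le[of y] by (rule le_less_trans[rotated])
      then have "w1 \<le> wsucc y" using w1_le_iff[OF o] by auto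
      moreover have "wsucc y < (if d < om then wsucc d else d)"
        using y(1) True sl wsucc_mono[OF o] by (auto simp: not_less intro: less_le_trans)
      ultimately show ?thesis using y True by simp
    next
      case False
      then show ?thesis using y w1om by (auto simp: not_less)
    qed
  next
    fix x assume x: "x \<in> {w1..<(if d < om then wsucc d else d)}"
    then have xw0: "x \<noteq> w0" using w1_le_iff[OF o] by auto
    show "x \<in> (\<lambda>y. if y < om then wsucc y else y) ` {..<d}"
    proof (cases "x < om")
      case True
      then obtain y where y: "x = wsucc y" using below_om xw0 by blast
      have "y < x" using y wsucc_gt[OF o] by simp
      then have yom: "y < om" using True by simp
      have "y < d"
      proof (cases "d < om")
        case True then show ?thesis using x y wsucc_mono[OF o] by auto
      next
        case False then show ?thesis using yom by (simp add: not_less less_le_trans)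
      qed
      then show ?thesis using y yom by (auto intro!: image_eqI[of _ _ y])
    next
      case False
      have "\<not> d < om"
      proof
        assume "d < om"
        then have "wsucc d \<le> om" by (rule wsucc_le)
        then show False using x False \<open>d < om\<close> by auto
      qed
      then show ?thesis using x False by (auto intro!: image_eqI[of _ _ x])
    qed
  qed
  show "w1 \<le> (if d < om then wsucc d else d)"
    using wsucc_mono[OF o, of w0 d] w1om unfolding w1_def
    by (auto simp: le_less not_less intro: less_le_trans)
qed

lemma wadd_w1_left_props:
  assumes o: "omega1_like TYPE('w::wellorder)"
  shows "wadd w1 (d::'w) \<noteq> w0" "wadd w1 d \<le> wsucc d"
proof -
  have "w0 < (om::'w)" using om_limit[OF o] unfolding wlimit_def by (metis le_less w0_le)
  have "w0 < wsucc d" using wsucc_gt[OF o, of d] w0_le[of d] by (rule le_less_trans[rotated])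
  then show "wadd w1 (d::'w) \<noteq> w0" "wadd w1 d \<le> wsucc d"
    using wadd_w1_left[OF o, of d] wsucc_gt[OF o, of d] \<open>w0 < om\<close>
    by (auto simp: less_imp_le)
qed


lemma lt_nil_right[simp]: "\<not> lt x (T [])"
proof (cases x)
  case (T xs) then show ?thesis by (cases xs) auto
qed

lemma lt_nil_left: "lt (T []) y = (y \<noteq> T [])"
proof (cases y)
  case (T xs) then show ?thesis by (cases xs) auto
qed

lemma T_untm[simp]: "T (untm x) = x"
  by (cases x) auto

lemma lt_trans: "lt x y \<Longrightarrow> lt y z \<Longrightarrow> lt x z"
proof (induction x y arbitrary: z rule: lt.induct)
  case (2 y ys)
  then show ?case by (simp add: lt_nil_left) (metis lt_nil_right)
next
  case (4 a b xs c d ys)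
  obtain zs where z: "z = T zs" by (cases z)
  show ?case
  proof (cases zs)
    case Nil then show ?thesis using 4 z by simp
  next
    case (Cons p zs')
    obtain e f where p: "p = (e, f)" by (cases p)
    show ?thesis using 4 z Cons p by auto
  qed
qed auto

lemma lt_prefix: "lt (T xs) (T (xs @ p # ps))"
  by (induction xs) (auto simp: lt_nil_left)

lemma lt_append_right: "lt z (T xs) \<Longrightarrow> lt z (T (xs @ ys))"
proof (induction xs arbitrary: z)
  case Nil then show ?case by simp
next
  case (Cons p xs)
  obtain zs where z: "z = T zs" by (cases z)
  show ?case
  proof (cases zs)
    case Nil then show ?thesis using z by (simp add: lt_nil_left)
  next
    case (Cons q zs')
    then show ?thesis using Cons.prems Cons.IH[of "T zs'"] z
      by (cases p; cases q) auto
  qed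
qed

lemma lt_append_cases:
  "lt (T zs) (T (as @ bs)) \<Longrightarrow> lt (T zs) (T as) \<or> (\<exists>rest. zs = as @ rest \<and> lt (T rest) (T bs))"
proof (induction as arbitrary: zs)
  case Nil then show ?case by simp
next
  case (Cons p as)
  show ?case
  proof (cases zs)
    case Nil then show ?thesis by (simp add: lt_nil_left)
  next
    case (Cons q zs')
    then show ?thesis using Cons.prems Cons.IH[of zs'] by (cases p; cases q) auto
  qed
qed

definition noz :: "('w tm \<times> 'w) list \<Rightarrow> bool" where
  "noz xs \<longleftrightarrow> (\<forall>(e, c) \<in> set xs. e \<noteq> T [])"

lemma lt_nil_nonempty: "e \<noteq> T [] \<Longrightarrow> lt (T []) e"
  by (simp add: lt_nil_left)

lemma lt_append_last:
  "lt (T xs) (T ys) \<Longrightarrow> noz ys \<Longrightarrow> lt (T (xs @ [(T [], d)])) (T ys)"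
proof (induction xs arbitrary: ys)
  case Nil
  then obtain e c ys' where "ys = (e, c) # ys'" by (cases ys) (auto simp: lt_nil_left)
  then show ?case using Nil by (auto simp: noz_def lt_nil_left)
next
  case (Cons p xs)
  then obtain q ys' where ys: "ys = q # ys'" by (cases ys) auto
  then show ?case using Cons.prems Cons.IH[of ys'] by (cases p; cases q) (auto simp: noz_def)
qed

lemma lt_change_last:
  "lt (T (xs @ [(T [], c)])) (T ys) \<Longrightarrow> noz ys \<Longrightarrow> lt (T (xs @ [(T [], c')])) (T ys)"
proof (induction xs arbitrary: ys)
  case Nil
  then obtain e f ys' where "ys = (e, f) # ys'" by (cases ys) auto
  then show ?case using Nil by (auto simp: noz_def lt_nil_left)
next
  case (Cons p xs)
  then obtain q ys' where ys: "ys = q # ys'" by (cases ys) auto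
  then show ?case using Cons.prems Cons.IH[of ys'] by (cases p; cases q) (auto simp: noz_def)
qed

lemma nf_snoc:
  "nf (T xs) \<Longrightarrow> (xs \<noteq> [] \<Longrightarrow> lt e (fst (last xs))) \<Longrightarrow> nf e \<Longrightarrow> c \<noteq> w0
   \<Longrightarrow> nf (T (xs @ [(e, c)]))"
proof (induction xs)
  case Nil then show ?case by simp
next
  case (Cons p xs)
  obtain a b where p: "p = (a, b)" by (cases p)
  show ?case
  proof (cases xs)
    case Nil then show ?thesis using Cons.prems p by simp
  next
    case (Cons q xs')
    then show ?thesis using Cons.prems Cons.IH p by (cases q) auto
  qed
qed

lemma nf_change_last:
  "nf (T (xs @ [(e, c)])) \<Longrightarrow> c' \<noteq> w0 \<Longrightarrow> nf (T (xs @ [(e, c')]))"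
proof (induction xs)
  case Nil then show ?case by simp
next
  case (Cons p xs)
  obtain a b where p: "p = (a, b)" by (cases p)
  show ?case
  proof (cases xs)
    case Nil then show ?thesis using Cons.prems p by simp
  next
    case (Cons q xs')
    then show ?thesis using Cons.prems Cons.IH p by (cases q) auto
  qed
qed

lemma nf_elems: "nf (T xs) \<Longrightarrow> (e, c) \<in> set xs \<Longrightarrow> c \<noteq> w0 \<and> nf e"
proof (induction xs)
  case Nil then show ?case by simp
next
  case (Cons p xs)
  obtain a b where p: "p = (a, b)" by (cases p)
  then show ?case using Cons by (auto split: list.splits)
qed

lemma nf_tail: "nf (T (p # xs)) \<Longrightarrow> nf (T xs)"
  by (cases p) auto

lemma nf_noz: "nf (T xs) \<Longrightarrow> xs \<noteq> [] \<Longrightarrow> fst (last xs) \<noteq> T [] \<Longrightarrow> noz xs"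
proof (induction xs)
  case Nil then show ?case by simp
next
  case (Cons p xs)
  obtain a b where p: "p = (a, b)" by (cases p)
  show ?case
  proof (cases xs)
    case Nil then show ?thesis using Cons.prems p by (simp add: noz_def)
  next
    case (Cons q xs')
    obtain c d where q: "q = (c, d)" by (cases q)
    have "noz xs" using Cons.IH Cons.prems Cons p by auto
    moreover have "lt c a" using Cons.prems Cons p q by simp
    then have "a \<noteq> T []" by auto
    ultimately show ?thesis using p Cons by (simp add: noz_def)
  qed
qed

lemma nf_zero_last: "nf (T (xs @ (T [], c) # r)) \<Longrightarrow> r = []"
proof (induction xs)
  case Nil then show ?case by (cases r) auto
next
  case (Cons p xs)
  then show ?case by (cases p; cases xs) (auto split: list.splits)
qed

lemma finite_Cs: "finite (Cs x)"
  by (induction x rule: Cs.induct) auto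

lemma w0_Cs: "w0 \<in> Cs x"
  by (induction x rule: Cs.induct) auto

lemma Cs_append: "Cs (T (xs @ ys)) = Cs (T xs) \<union> Cs (T ys)"
  by (induction xs) (auto simp: w0_Cs)

lemma Cs_cons: "Cs (T ((a, b) # xs)) = Cs a \<union> Cs (T xs) \<union> {b}"
  by simp

lemma Cs_single0: "Cs (T [(T [], d)]) = {w0, d}"
  by auto

lemma star_less_iff: "(star x < \<theta>) = (\<forall>c\<in>Cs x. c < \<theta>)"
  unfolding star_def using finite_Cs w0_Cs by (subst Max_less_iff) auto

lemma star_le_iff: "(star x \<le> \<theta>) = (\<forall>c\<in>Cs x. c \<le> \<theta>)"
  unfolding star_def using finite_Cs w0_Cs by (subst Max_le_iff) auto

lemma Cs_le_star: "c \<in> Cs x \<Longrightarrow> c \<le> star x"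
  unfolding star_def by (rule Max_ge[OF finite_Cs])

lemma star_cw: "star (cw c) = c"
proof -
  have "Cs (cw c) = {w0, c}" unfolding cw_def by auto
  then show ?thesis unfolding star_def by (simp add: max_def)
qed

lemma cw_nf: "nf (cw c)"
  unfolding cw_def by auto

lemma to_w_cw: "to_w (cw c) = c"
  unfolding cw_def to_w_def by auto


lemma size_exp_less: "size a < size (T ((a, b) # ys))"
  by simp

lemma acc_cons:
  assumes "a \<in> Wellfounded.acc tmrel"
  shows "\<forall>b ys. nf (T ((a, b) # ys)) \<longrightarrow> T ((a, b) # ys) \<in> Wellfounded.acc (tmrel::('w::wellorder tm \<times> _) set)"
proof (rule acc_induct[OF assms, where P="\<lambda>a. \<forall>b ys. nf (T ((a, b) # ys)) \<longrightarrow> T ((a, b) # ys) \<in> Wellfounded.acc tmrel"])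
  fix a :: "'w tm"
  assume "a \<in> Wellfounded.acc tmrel"
  assume IHa: "\<forall>y. (y, a) \<in> tmrel \<longrightarrow> (\<forall>b ys. nf (T ((y, b) # ys)) \<longrightarrow> T ((y, b) # ys) \<in> Wellfounded.acc tmrel)"
  show "\<forall>b ys. nf (T ((a, b) # ys)) \<longrightarrow> T ((a, b) # ys) \<in> Wellfounded.acc tmrel"
  proof (rule allI)
    fix b :: 'w
    show "\<forall>ys. nf (T ((a, b) # ys)) \<longrightarrow> T ((a, b) # ys) \<in> Wellfounded.acc tmrel"
    proof (induction b rule: less_induct)
      case (less b)
      note IHb = less.IH
      show ?case
      proof (intro allI impI)
        fix ys assume nfx: "nf (T ((a, b) # ys))"
        have acc_ys: "T ys \<in> Wellfounded.acc tmrel"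
        proof (cases ys)
          case Nil
          show ?thesis unfolding Nil by (rule accI) (simp add: tmrel_def)
        next
          case (Cons q ys')
          obtain c e where q: "q = (c, e)" by (cases q)
          have "(c, a) \<in> tmrel" using nfx Cons q by (simp add: tmrel_def)
          then show ?thesis using IHa nfx Cons q by auto
        qed
        have "\<And>w. w \<in> Wellfounded.acc tmrel \<Longrightarrow> \<forall>ws. w = T ws \<longrightarrow> nf (T ((a, b) # ws)) \<longrightarrow> T ((a, b) # ws) \<in> Wellfounded.acc tmrel"
        proof -
          fix w :: "'w tm" assume "w \<in> Wellfounded.acc tmrel"
          then show "\<forall>ws. w = T ws \<longrightarrow> nf (T ((a, b) # ws)) \<longrightarrow> T ((a, b) # ws) \<in> Wellfounded.acc tmrel"
          proof (rule acc_induct[where P="\<lambda>w. \<forall>ws. w = T ws \<longrightarrow> nf (T ((a, b) # ws)) \<longrightarrow> T ((a, b) # ws) \<in> Wellfounded.acc tmrel"])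
            fix w :: "'w tm"
            assume "w \<in> Wellfounded.acc tmrel"
            assume IHw: "\<forall>y. (y, w) \<in> tmrel \<longrightarrow> (\<forall>ws. y = T ws \<longrightarrow> nf (T ((a, b) # ws)) \<longrightarrow> T ((a, b) # ws) \<in> Wellfounded.acc tmrel)"
            show "\<forall>ws. w = T ws \<longrightarrow> nf (T ((a, b) # ws)) \<longrightarrow> T ((a, b) # ws) \<in> Wellfounded.acc tmrel"
            proof (intro allI impI)
              fix ws assume w: "w = T ws" and nfw: "nf (T ((a, b) # ws))"
              show "T ((a, b) # ws) \<in> Wellfounded.acc tmrel"
              proof (rule accI)
                fix y assume "(y, T ((a, b) # ws)) \<in> tmrel"
                then have nfy: "nf y" and lty: "lt y (T ((a, b) # ws))" by (auto simp: tmrel_def)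
                obtain zs where y: "y = T zs" by (cases y)
                show "y \<in> Wellfounded.acc tmrel"
                proof (cases zs)
                  case Nil
                  show ?thesis unfolding y Nil by (rule accI) (simp add: tmrel_def)
                next
                  case (Cons q zs')
                  obtain c e where q: "q = (c, e)" by (cases q)
                  have "lt c a \<or> (c = a \<and> (e < b \<or> (e = b \<and> lt (T zs') (T ws))))"
                    using lty y Cons q by simp
                  moreover
                  { assume "lt c a"
                    then have "(c, a) \<in> tmrel" using nfy nfw y Cons q by (simp add: tmrel_def)
                    then have ?thesis using IHa nfy y Cons q by auto }
                  moreover
                  { assume "c = a" "e < b"
                    then have ?thesis using IHb nfy y Cons q by auto }
                  moreover
                  { assume "c = a" "e = b" "lt (T zs') (T ws)"
                    then have "(T zs', w) \<in> tmrel" using nfy nfw y Cons q w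
                      by (auto simp: tmrel_def dest: nf_tail)
                    then have ?thesis using IHw nfy y Cons q \<open>c = a\<close> \<open>e = b\<close> by auto }
                  ultimately show ?thesis by blast
                qed
              qed
            qed
          qed
        qed
        then show "T ((a, b) # ys) \<in> Wellfounded.acc tmrel" using acc_ys nfx by blast
      qed
    qed
  qed
qed

lemma all_acc: "x \<in> Wellfounded.acc (tmrel::('w::wellorder tm \<times> _) set)"
proof (induction x rule: measure_induct_rule[where f=size])
  case (less x)
  obtain xs where x: "x = T xs" by (cases x)
  show ?case
  proof (cases "nf x")
    case False
    show ?thesis by (rule accI) (use False in \<open>simp add: tmrel_def\<close>)
  next
    case True
    show ?thesis
    proof (cases xs)
      case Nil
      show ?thesis unfolding x Nil by (rule accI) (simp add: tmrel_def)
    next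
      case (Cons q ys)
      obtain a b where q: "q = (a, b)" by (cases q)
      have "size a < size x" using x Cons q by simp
      then have "a \<in> Wellfounded.acc tmrel" using less by blast
      then show ?thesis using acc_cons True x Cons q by blast
    qed
  qed
qed


lemma wf_tmrel: "wf (tmrel::('w::wellorder tm \<times> _) set)"
  unfolding wf_iff_acc using all_acc by blast

lemma Theta_unfold:
  assumes "nf x"
  shows "Theta X x = (LEAST \<theta>. \<theta> \<in> X \<and> star x < \<theta> \<and>
      (\<forall>z. nf z \<and> lt z x \<and> star z < \<theta> \<longrightarrow> Theta X z < \<theta>))"
proof -
  have "Theta X x = (\<lambda>f x. LEAST \<theta>. \<theta> \<in> X \<and> star x < \<theta> \<and>
      (\<forall>z. nf z \<and> lt z x \<and> star z < \<theta> \<longrightarrow> f z < \<theta>)) (cut (Theta X) tmrel x) x"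
    unfolding Theta_def by (rule wfrec[OF wf_tmrel])
  also have "\<dots> = (LEAST \<theta>. \<theta> \<in> X \<and> star x < \<theta> \<and>
      (\<forall>z. nf z \<and> lt z x \<and> star z < \<theta> \<longrightarrow> Theta X z < \<theta>))"
    using assms by (simp add: cut_def tmrel_def cong: conj_cong)
  finally show ?thesis .
qed

instance tm :: (countable) countable by countable_datatype

lemma set_tm_Cs: "set_tm z \<subseteq> Cs z"
  by (induction z rule: Cs.induct) auto

lemma countable_small:
  assumes o: "omega1_like TYPE('w::wellorder)"
  shows "countable {z::'w tm. star z < \<theta>}"
proof -
  have cS: "countable {..<\<theta>}" using o unfolding omega1_like_def by blast
  then obtain e :: "'w \<Rightarrow> nat" where e: "inj_on e {..<\<theta>}" by (auto simp: countable_def)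
  let ?A = "{z::'w tm. set_tm z \<subseteq> {..<\<theta>}}"
  have "inj_on (map_tm e) ?A"
  proof (rule inj_onI)
    fix x y assume "x \<in> ?A" "y \<in> ?A" "map_tm e x = map_tm e y"
    then show "x = y" using e by (intro tm.inj_map_strong[of x y e e]) (auto dest: inj_onD)
  qed
  moreover have "countable (map_tm e ` ?A)" by (rule countableI_type)
  ultimately have "countable ?A" by (rule countable_image_inj_on[rotated])
  moreover have "{z::'w tm. star z < \<theta>} \<subseteq> ?A"
  proof
    fix z assume "z \<in> {z::'w tm. star z < \<theta>}"
    then have "\<forall>c\<in>Cs z. c < \<theta>" using star_less_iff by blast
    then show "z \<in> ?A" using set_tm_Cs[of z] by auto
  qed
  ultimately show ?thesis by (rule countable_subset[rotated])
qed

lemma Theta_props: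
  assumes o: "omega1_like TYPE('w::wellorder)" and cl: "club X" and nfx: "nf (x::'w tm)"
  shows "Theta X x \<in> X" "star x < Theta X x"
    "\<forall>z. nf z \<and> lt z x \<and> star z < Theta X x \<longrightarrow> Theta X z < Theta X x"
    "\<And>\<theta>. \<theta> \<in> X \<Longrightarrow> star x < \<theta> \<Longrightarrow> (\<forall>z. nf z \<and> lt z x \<and> star z < \<theta> \<longrightarrow> Theta X z < \<theta>)
       \<Longrightarrow> Theta X x \<le> \<theta>"
proof -
  define P where "P \<theta> \<longleftrightarrow> \<theta> \<in> X \<and> star x < \<theta> \<and>
      (\<forall>z. nf z \<and> lt z x \<and> star z < \<theta> \<longrightarrow> Theta X z < \<theta>)" for \<theta>
  have TL: "Theta X x = (LEAST \<theta>. P \<theta>)" unfolding P_def by (rule Theta_unfold[OF nfx])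
  have ex: "\<exists>\<theta>. P \<theta>"
  proof -
    have "\<exists>h. \<forall>z. nf z \<and> lt z x \<and> star z < \<theta> \<longrightarrow> Theta X z < h" for \<theta>
    proof -
      have "countable (Theta X ` {z. star z < \<theta>})" using countable_small[OF o] by blast
      then obtain h where "\<forall>a\<in>Theta X ` {z. star z < \<theta>}. a < h" using o1_bound[OF o] by blast
      then show ?thesis by auto
    qed
    then obtain B where B: "\<And>\<theta> z. nf z \<Longrightarrow> lt z x \<Longrightarrow> star z < \<theta> \<Longrightarrow> Theta X z < B \<theta>" by metis
    have "\<exists>y\<in>X. a < y" for a using cl unfolding club_def by blast
    then obtain N where N: "\<And>a. N a \<in> X" "\<And>a. a < N a" by metis
    define u where "u = rec_nat (star x) (\<lambda>_ \<theta>. N (max \<theta> (B \<theta>)))"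
    have uS: "u (Suc k) = N (max (u k) (B (u k)))" for k unfolding u_def by simp
    have u0: "u 0 = star x" unfolding u_def by simp
    have ugt: "u k < u (Suc k)" "B (u k) < u (Suc k)" for k
      using N(2)[of "max (u k) (B (u k))"] unfolding uS by auto
    have sm: "strict_mono u" unfolding strict_mono_Suc_iff using ugt by blast
    let ?s = "wsup (range u)"
    note S = wsup_seq[OF o sm]
    have "?s \<in> X"
    proof -
      have "\<forall>b<?s. \<exists>y\<in>X. b < y \<and> y < ?s"
      proof (intro allI impI)
        fix b assume "b < ?s"
        then obtain n where "b < u n" using S(2) by blast
        then show "\<exists>y\<in>X. b < y \<and> y < ?s"
          using ugt(1)[of n] N(1) uS S(1) by (metis less_trans)
      qed
      then show ?thesis using cl S(3) unfolding club_def by blast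
    qed
    moreover have "star x < ?s" using S(1) u0 by metis
    moreover have "\<forall>z. nf z \<and> lt z x \<and> star z < ?s \<longrightarrow> Theta X z < ?s"
    proof (intro allI impI)
      fix z assume z: "nf z \<and> lt z x \<and> star z < ?s"
      then obtain n where "star z < u n" using S(2) by blast
      then have "Theta X z < B (u n)" using B z by blast
      then show "Theta X z < ?s" using ugt(2)[of n] S(1) by (metis less_trans)
    qed
    ultimately show ?thesis unfolding P_def by blast
  qed
  have "P (Theta X x)" unfolding TL using ex by (rule LeastI_ex)
  then show "Theta X x \<in> X" "star x < Theta X x"
    "\<forall>z. nf z \<and> lt z x \<and> star z < Theta X x \<longrightarrow> Theta X z < Theta X x"
    unfolding P_def by blast+
  show "\<And>\<theta>. \<theta> \<in> X \<Longrightarrow> star x < \<theta> \<Longrightarrow> (\<forall>z. nf z \<and> lt z x \<and> star z < \<theta> \<longrightarrow> Theta X z < \<theta>)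
       \<Longrightarrow> Theta X x \<le> \<theta>"
    unfolding TL by (rule Least_le) (simp add: P_def)
qed


definition path :: "'w::wellorder \<Rightarrow> 'w tm \<Rightarrow> bool" where
  "path \<tau> x \<longleftrightarrow> nf x \<and> x \<noteq> T [] \<and> tau x = cw \<tau> \<and> w1 < \<tau>"

lemma cw_nz: "c \<noteq> w0 \<Longrightarrow> cw c = T [(T [], c)]"
  unfolding cw_def by simp

lemma one_eq: "one = T [(T [], w1)]" unfolding one_def ..

lemma star_mono: "Cs y \<subseteq> Cs x \<Longrightarrow> star y \<le> star x"
  using star_le_iff Cs_le_star by blast

lemma path_multi:
  "path \<tau> (T ((a, b) # x # xs)) \<Longrightarrow> path \<tau> (T (x # xs))"
  unfolding path_def by (auto dest: nf_tail)

lemma path_single_cases: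
  assumes o: "omega1_like TYPE('w::wellorder)" and p: "path (\<tau>::'w) (T [(a, b)])"
  shows "(wlimit b \<and> b = \<tau>) \<or>
         (\<not> wlimit b \<and> a \<noteq> T [] \<and> \<not> tsucc a \<and> path \<tau> a \<and> (\<exists>c. b = wsucc c) \<and> b \<noteq> w0)"
proof -
  have tne: "\<tau> \<noteq> w0" using p w0_less_w1[OF o] unfolding path_def by auto
  have nfb: "b \<noteq> w0" "nf a" using p unfolding path_def by auto
  have tw: "w1 \<noteq> \<tau>" using p unfolding path_def by auto
  show ?thesis
  proof (cases "wlimit b")
    case True
    then have "cw b = cw \<tau>" using p unfolding path_def by simp
    then have "b = \<tau>" using True tne unfolding cw_def wlimit_def by (auto split: if_splits)
    then show ?thesis using True by simp
  next
    case False
    have "a \<noteq> T []"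
    proof
      assume "a = T []"
      then have "one = cw \<tau>" using p False unfolding path_def by simp
      then show False using tne tw unfolding one_eq cw_def by (auto split: if_splits)
    qed
    moreover have "\<not> tsucc a"
    proof
      assume "tsucc a"
      then have "Omega = cw \<tau>" using p False \<open>a \<noteq> T []\<close> unfolding path_def by simp
      then show False using tne unfolding Omega_def one_eq cw_def by (auto split: if_splits)
    qed
    moreover have "tau a = cw \<tau>" using p False calculation unfolding path_def by simp
    ultimately show ?thesis using False nfb p nonlimit_cases[of b] unfolding path_def by auto
  qed
qed

lemma fs_single_succ:
  "\<not> wlimit b \<Longrightarrow> a \<noteq> T [] \<Longrightarrow> \<not> tsucc a \<Longrightarrow>
   fs (T [(a, b)]) \<theta> = (if b = w1 then T [(fs a \<theta>, w1)] else T [(a, wpred b), (fs a \<theta>, w1)])"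
  by (simp add: Let_def)

lemma fs_single_lim: "wlimit b \<Longrightarrow> fs (T [(a, b)]) \<theta> = mono a \<theta>"
  by simp

lemma fs_multi: "fs (T ((a, b) # x # xs)) \<theta> = T ((a, b) # untm (fs (T (x # xs)) \<theta>))"
  by simp

declare fs.simps(2)[simp del] fs_single_lim[simp] fs_single_succ[simp]

lemma wpred_props:
  assumes o: "omega1_like TYPE('w::wellorder)" and "b = wsucc (c::'w)" "b \<noteq> w1"
  shows "wpred b \<noteq> w0" "wpred b < b"
  using assms wpred_wsucc[OF o] wsucc_gt[OF o] unfolding w1_def by auto

lemma w1_ne_w0: "omega1_like TYPE('w::wellorder) \<Longrightarrow> (w1::'w) \<noteq> w0"
  using w0_less_w1 by fastforce

lemma path_tau_in:
  assumes o: "omega1_like TYPE('w::wellorder)"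
  shows "path (\<tau>::'w) x \<Longrightarrow> \<tau> \<in> Cs x"
proof (induction x rule: tau.induct)
  case 1 then show ?case by (simp add: path_def)
next
  case (2 a b)
  from path_single_cases[OF o 2(2)] show ?case
  proof
    assume "wlimit b \<and> b = \<tau>" then show ?thesis by simp
  next
    assume "\<not> wlimit b \<and> a \<noteq> T [] \<and> \<not> tsucc a \<and> path \<tau> a \<and> (\<exists>c. b = wsucc c) \<and> b \<noteq> w0"
    then show ?thesis using 2(1) by auto
  qed
next
  case (3 a b x xs)
  then show ?case using path_multi by fastforce
qed

lemma FS_ne:
  assumes o: "omega1_like TYPE('w::wellorder)"
  shows "path (\<tau>::'w) x \<Longrightarrow> \<theta> \<noteq> w0 \<Longrightarrow> fs x \<theta> \<noteq> T []"
proof (induction x rule: tau.induct)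
  case 1 then show ?case by (simp add: path_def)
next
  case (2 a b)
  from path_single_cases[OF o 2(2)] show ?case
  proof
    assume "wlimit b \<and> b = \<tau>" then show ?thesis using 2 by (auto simp: mono_def)
  next
    assume "\<not> wlimit b \<and> a \<noteq> T [] \<and> \<not> tsucc a \<and> path \<tau> a \<and> (\<exists>c. b = wsucc c) \<and> b \<noteq> w0"
    then show ?thesis by (simp add: Let_def)
  qed
next
  case (3 a b x xs)
  then show ?case by simp
qed

lemma FS_basic:
  assumes o: "omega1_like TYPE('w::wellorder)"
  shows "path (\<tau>::'w) x \<Longrightarrow> \<theta> < \<tau> \<Longrightarrow> nf (fs x \<theta>) \<and> lt (fs x \<theta>) x \<and>
    (\<forall>c e r a b r0. fs x \<theta> = T ((c, e) # r) \<longrightarrow> x = T ((a, b) # r0) \<longrightarrow> c = a \<or> lt c a)"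
proof (induction x rule: tau.induct)
  case 1 then show ?case by (simp add: path_def)
next
  case (2 a b)
  from path_single_cases[OF o 2(2)] show ?case
  proof
    assume "wlimit b \<and> b = \<tau>"
    then show ?thesis using 2(2,3) unfolding path_def by (auto simp: mono_def lt_nil_left split: if_splits)
  next
    assume A: "\<not> wlimit b \<and> a \<noteq> T [] \<and> \<not> tsucc a \<and> path \<tau> a \<and> (\<exists>c. b = wsucc c) \<and> b \<noteq> w0"
    then have IH: "nf (fs a \<theta>)" "lt (fs a \<theta>) a" using 2 by auto
    have nfa: "nf a" using A unfolding path_def by simp
    show ?thesis
    proof (cases "b = w1")
      case True
      then show ?thesis using A IH w1_ne_w0[OF o] by (simp add: fs_single_succ)
    next
      case False
      obtain c where c: "b = wsucc c" using A by blast
      have "wpred b \<noteq> w0" "wpred b < b" using wpred_props[OF o c False] by auto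
      then show ?thesis using A IH False nfa w1_ne_w0[OF o] by (simp add: fs_single_succ)
    qed
  qed
next
  case (3 a b x xs)
  have p: "path \<tau> (T (x # xs))" using path_multi[OF 3(2)] .
  have IH: "nf (fs (T (x # xs)) \<theta>)" "lt (fs (T (x # xs)) \<theta>) (T (x # xs))"
    "\<And>c e r a' b' r0. fs (T (x # xs)) \<theta> = T ((c, e) # r) \<Longrightarrow> T (x # xs) = T ((a', b') # r0) \<Longrightarrow> c = a' \<or> lt c a'"
    using 3(1)[OF p 3(3)] by blast+
  obtain a2 b2 where x: "x = (a2, b2)" by (cases x)
  have nfx: "nf a" "b \<noteq> w0" "lt a2 a" using 3(2) x unfolding path_def by auto
  have lead: "case untm (fs (T (x # xs)) \<theta>) of [] \<Rightarrow> True | (c, d) # _ \<Rightarrow> lt c a"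
  proof (cases "untm (fs (T (x # xs)) \<theta>)")
    case Nil then show ?thesis by simp
  next
    case (Cons q r)
    obtain c e where q: "q = (c, e)" by (cases q)
    have "fs (T (x # xs)) \<theta> = T ((c, e) # r)" using Cons q by (metis T_untm)
    then have "c = a2 \<or> lt c a2" using IH(3) x by blast
    then have "lt c a" using nfx(3) lt_trans by blast
    then show ?thesis using Cons q by simp
  qed
  have "nf (T ((a, b) # untm (fs (T (x # xs)) \<theta>)))" using nfx IH(1) lead by simp
  moreover have "lt (T ((a, b) # untm (fs (T (x # xs)) \<theta>))) (T ((a, b) # x # xs))"
    using IH(2) by simp
  ultimately show ?case by simp
qed

lemma FS_mono:
  assumes o: "omega1_like TYPE('w::wellorder)"
  shows "path (\<tau>::'w) x \<Longrightarrow> \<theta> < \<theta>' \<Longrightarrow> lt (fs x \<theta>) (fs x \<theta>')"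
proof (induction x rule: tau.induct)
  case 1 then show ?case by (simp add: path_def)
next
  case (2 a b)
  from path_single_cases[OF o 2(2)] show ?case
  proof
    assume "wlimit b \<and> b = \<tau>"
    then show ?thesis using 2(3) by (auto simp: mono_def lt_nil_left)
  next
    assume A: "\<not> wlimit b \<and> a \<noteq> T [] \<and> \<not> tsucc a \<and> path \<tau> a \<and> (\<exists>c. b = wsucc c) \<and> b \<noteq> w0"
    then have IH: "lt (fs a \<theta>) (fs a \<theta>')" using 2 by auto
    then show ?thesis using A by (simp add: fs_single_succ)
  qed
next
  case (3 a b x xs)
  then show ?case using path_multi by fastforce
qed

lemma FS_Cs:
  assumes o: "omega1_like TYPE('w::wellorder)"
  shows "path (\<tau>::'w) x \<Longrightarrow> \<forall>c\<in>Cs (fs x \<theta>). c \<le> star x \<or> c = \<theta>"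
proof (induction x rule: tau.induct)
  case 1 then show ?case by (simp add: path_def)
next
  case (2 a b)
  have sa: "star a \<le> star (T [(a, b)])" by (rule star_mono) auto
  have sb: "b \<le> star (T [(a, b)])" by (rule Cs_le_star) auto
  have sa': "\<forall>c\<in>Cs a. c \<le> star (T [(a, b)])" using sa Cs_le_star[of _ a] order_trans by blast
  from path_single_cases[OF o 2(2)] show ?case
  proof
    assume "wlimit b \<and> b = \<tau>"
    then show ?thesis using sa' by (auto simp: mono_def split: if_splits)
  next
    assume A: "\<not> wlimit b \<and> a \<noteq> T [] \<and> \<not> tsucc a \<and> path \<tau> a \<and> (\<exists>c. b = wsucc c) \<and> b \<noteq> w0"
    then have IH: "\<forall>c\<in>Cs (fs a \<theta>). c \<le> star a \<or> c = \<theta>" using 2 by auto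
    have w1b: "w1 \<le> b" using A w1_le_iff[OF o] by auto
    have wpb: "wpred b \<le> b" if "b \<noteq> w1" using wpred_props[OF o _ that] A by (auto intro: less_imp_le)
    have IH': "\<forall>c\<in>Cs (fs a \<theta>). c \<le> star (T [(a, b)]) \<or> c = \<theta>" using IH sa order_trans by blast
    show ?thesis using IH' sa' sb w1b wpb A order_trans[OF _ sb]
      by (auto simp: fs_single_succ)
  qed
next
  case (3 a b x xs)
  have p: "path \<tau> (T (x # xs))" using path_multi[OF 3(2)] .
  have IH: "\<forall>c\<in>Cs (fs (T (x # xs)) \<theta>). c \<le> star (T (x # xs)) \<or> c = \<theta>" using 3(1)[OF p] .
  obtain a2 b2 where x: "x = (a2, b2)" by (cases x)
  have s1: "star (T (x # xs)) \<le> star (T ((a, b) # x # xs))" by (rule star_mono) auto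
  have s2: "star a \<le> star (T ((a, b) # x # xs))" by (rule star_mono) auto
  have s3: "b \<le> star (T ((a, b) # x # xs))" by (rule Cs_le_star) auto
  have "Cs (fs (T ((a, b) # x # xs)) \<theta>) = Cs a \<union> Cs (fs (T (x # xs)) \<theta>) \<union> {b}"
    by (simp only: fs_multi Cs_cons T_untm)
  then show ?case using IH s1 s2 s3 Cs_le_star[of _ a] by (auto intro: order_trans)
qed

lemma FS_theta:
  assumes o: "omega1_like TYPE('w::wellorder)"
  shows "path (\<tau>::'w) x \<Longrightarrow> \<theta> \<noteq> w0 \<Longrightarrow> \<theta> \<in> Cs (fs x \<theta>)"
proof (induction x rule: tau.induct)
  case 1 then show ?case by (simp add: path_def)
next
  case (2 a b)
  from path_single_cases[OF o 2(2)] show ?case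
  proof
    assume "wlimit b \<and> b = \<tau>"
    then show ?thesis using 2(3) by (auto simp: mono_def)
  next
    assume A: "\<not> wlimit b \<and> a \<noteq> T [] \<and> \<not> tsucc a \<and> path \<tau> a \<and> (\<exists>c. b = wsucc c) \<and> b \<noteq> w0"
    then have IH: "\<theta> \<in> Cs (fs a \<theta>)" using 2 by auto
    then show ?thesis using A by (simp add: fs_single_succ)
  qed
next
  case (3 a b x xs)
  have p: "path \<tau> (T (x # xs))" using path_multi[OF 3(2)] .
  have "\<theta> \<in> Cs (fs (T (x # xs)) \<theta>)" using 3(1)[OF p 3(3)] .
  moreover have "Cs (fs (T ((a, b) # x # xs)) \<theta>) = Cs a \<union> Cs (fs (T (x # xs)) \<theta>) \<union> {b}"
    by (simp only: fs_multi Cs_cons T_untm)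
  ultimately show ?case by simp
qed

lemma FS_noz:
  assumes o: "omega1_like TYPE('w::wellorder)"
  shows "path (\<tau>::'w) x \<Longrightarrow> noz (untm x) \<Longrightarrow>
    \<forall>(e, c)\<in>set (untm (fs x \<theta>)). e = T [] \<longrightarrow> \<theta> = w0 \<and> c = w1"
proof (induction x rule: tau.induct)
  case 1 then show ?case by (simp add: path_def)
next
  case (2 a b)
  from path_single_cases[OF o 2(2)] show ?case
  proof
    assume "wlimit b \<and> b = \<tau>"
    then show ?thesis using 2(3) by (auto simp: mono_def noz_def split: if_splits)
  next
    assume A: "\<not> wlimit b \<and> a \<noteq> T [] \<and> \<not> tsucc a \<and> path \<tau> a \<and> (\<exists>c. b = wsucc c) \<and> b \<noteq> w0"
    then have "fs a \<theta> = T [] \<Longrightarrow> \<theta> = w0" using FS_ne[OF o] by blast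
    then show ?thesis using A by (auto simp: fs_single_succ)
  qed
next
  case (3 a b x xs)
  have p: "path \<tau> (T (x # xs))" using path_multi[OF 3(2)] .
  have "noz (x # xs)" using 3(3) by (simp add: noz_def)
  then have IH: "\<forall>(e, c)\<in>set (untm (fs (T (x # xs)) \<theta>)). e = T [] \<longrightarrow> \<theta> = w0 \<and> c = w1"
    using 3(1)[OF p] by simp
  moreover have "a \<noteq> T []" using 3(3) by (simp add: noz_def)
  ultimately show ?case by (simp only: fs_multi) auto
qed

lemma FS_cof:
  assumes o: "omega1_like TYPE('w::wellorder)"
  shows "path (\<tau>::'w) x \<Longrightarrow> nf z \<Longrightarrow> lt z x \<Longrightarrow> \<exists>\<theta><\<tau>. lt z (fs x \<theta>)"
proof (induction x arbitrary: z rule: tau.induct)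
  case 1 then show ?case by (simp add: path_def)
next
  case (2 a b)
  have w1t: "w1 < \<tau>" using 2(2) unfolding path_def by simp
  have w0t: "w0 < \<tau>" using w0_less_w1[OF o] w1t by (rule less_trans)
  obtain zs where z: "z = T zs" by (cases z)
  from path_single_cases[OF o 2(2)] show ?case
  proof
    assume L: "wlimit b \<and> b = \<tau>"
    show ?thesis
    proof (cases zs)
      case Nil
      then show ?thesis using L w1t w1_ne_w0[OF o] z
        by (intro exI[of _ w1]) (auto simp: mono_def lt_nil_left)
    next
      case (Cons q zs')
      obtain c e where q: "q = (c, e)" by (cases q)
      have "lt c a \<or> (c = a \<and> e < b)" using 2(4) z Cons q by auto
      then show ?thesis
      proof
        assume "lt c a"
        then show ?thesis using L w1t w1_ne_w0[OF o] z Cons q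
          by (intro exI[of _ w1]) (auto simp: mono_def)
      next
        assume ce: "c = a \<and> e < b"
        have "wsucc e < \<tau>" using wlimit_wsucc_less[OF o _ ] L ce by blast
        moreover have "e < wsucc e" by (rule wsucc_gt[OF o])
        ultimately show ?thesis using L ce z Cons q
          by (intro exI[of _ "wsucc e"]) (auto simp: mono_def)
      qed
    qed
  next
    assume A: "\<not> wlimit b \<and> a \<noteq> T [] \<and> \<not> tsucc a \<and> path \<tau> a \<and> (\<exists>c. b = wsucc c) \<and> b \<noteq> w0"
    have IH: "\<And>z. nf z \<Longrightarrow> lt z a \<Longrightarrow> \<exists>\<theta><\<tau>. lt z (fs a \<theta>)" using 2(1) A by blast
    obtain bp where bp: "b = wsucc bp" using A by blast
    show ?thesis
    proof (cases zs)
      case Nil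
      then show ?thesis using z A w0t by (intro exI[of _ w0]) (auto simp: fs_single_succ lt_nil_left)
    next
      case (Cons q zs')
      obtain c e where q: "q = (c, e)" by (cases q)
      have nfc: "nf c" "e \<noteq> w0" using 2(3) z Cons q by auto
      have cases: "lt c a \<or> (c = a \<and> e < b)" using 2(4) z Cons q by auto
      show ?thesis
      proof (cases "b = w1")
        case True
        have "lt c a"
          using cases True nfc(2) less_wsucc_iff[OF o, of e w0] unfolding w1_def
          by (auto simp: antisym)
        then obtain \<theta> where "\<theta> < \<tau>" "lt c (fs a \<theta>)" using IH nfc by blast
        then show ?thesis using True A z Cons q by (intro exI[of _ \<theta>]) (auto simp: fs_single_succ)
      next
        case False
        have wpb: "wpred b = bp" using bp wpred_wsucc[OF o] by simp
        from cases show ?thesis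
        proof
          assume "lt c a"
          then show ?thesis using False A z Cons q w0t by (intro exI[of _ w0]) (auto simp: fs_single_succ)
        next
          assume ce: "c = a \<and> e < b"
          then have "e \<le> bp" using bp less_wsucc_iff[OF o] by auto
          then show ?thesis
          proof (cases "e < bp")
            case True
            then show ?thesis using False A z Cons q w0t ce wpb
              by (intro exI[of _ w0]) (auto simp: fs_single_succ)
          next
            case False2: False
            then have ebp: "e = bp" using \<open>e \<le> bp\<close> by simp
            show ?thesis
            proof (cases zs')
              case Nil
              then show ?thesis using False A z Cons q w0t ce wpb ebp
                by (intro exI[of _ w0]) (auto simp: fs_single_succ lt_nil_left)
            next
              case (Cons q' zs'')
              obtain c' e' where q': "q' = (c', e')" by (cases q')
              have "nf c'" "lt c' a" using 2(3) z \<open>zs = q # zs'\<close> q Cons q' ce by auto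
              then obtain \<theta> where "\<theta> < \<tau>" "lt c' (fs a \<theta>)" using IH by blast
              then show ?thesis using False A z \<open>zs = q # zs'\<close> q Cons q' ce wpb ebp
                by (intro exI[of _ \<theta>]) (auto simp: fs_single_succ)
            qed
          qed
        qed
      qed
    qed
  qed
next
  case (3 a b x xs)
  have p: "path \<tau> (T (x # xs))" using path_multi[OF 3(2)] .
  obtain zs where z: "z = T zs" by (cases z)
  have w1t: "w1 < \<tau>" using 3(2) unfolding path_def by simp
  have w0t: "w0 < \<tau>" using w0_less_w1[OF o] w1t by (rule less_trans)
  show ?case
  proof (cases zs)
    case Nil
    then show ?thesis using z w0t by (intro exI[of _ w0]) (simp add: lt_nil_left)
  next
    case (Cons q zs')
    obtain c e where q: "q = (c, e)" by (cases q)
    have cases: "lt c a \<or> (c = a \<and> (e < b \<or> (e = b \<and> lt (T zs') (T (x # xs)))))"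
      using 3(4) z Cons q by simp
    show ?thesis
    proof (cases "c = a \<and> e = b \<and> lt (T zs') (T (x # xs))")
      case True
      have "nf (T zs')" using 3(3) z Cons q by auto
      then obtain \<theta> where "\<theta> < \<tau>" "lt (T zs') (fs (T (x # xs)) \<theta>)" using 3(1)[OF p] True by blast
      then show ?thesis using z Cons q True by (intro exI[of _ \<theta>]) (simp only: fs_multi lt.simps T_untm, simp)
    next
      case False
      then have "lt c a \<or> (c = a \<and> e < b)" using cases by blast
      moreover have "fs (T ((a, b) # x # xs)) w0 = T ((a, b) # untm (fs (T (x # xs)) w0))" by (rule fs_multi)
      ultimately show ?thesis using z Cons q w0t by (intro exI[of _ w0]) auto
    qed
  qed
qed


lemma tadd_w0[simp]: "tadd x w0 = x"
  by (cases x) simp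

lemma tadd_form:
  "d \<noteq> w0 \<Longrightarrow> tadd (T xs) d = (if xs \<noteq> [] \<and> fst (last xs) = T []
     then T (butlast xs @ [(T [], wadd (snd (last xs)) d)]) else T (xs @ [(T [], d)]))"
  by simp

declare tadd.simps[simp del]

lemma lt_irrefl: "\<not> lt x x"
proof -
  have "x = y \<longrightarrow> \<not> lt x y" for y
    by (induction x y rule: lt.induct) auto
  then show ?thesis by blast
qed

lemma noz_last: "noz xs \<Longrightarrow> xs \<noteq> [] \<Longrightarrow> fst (last xs) \<noteq> T []"
  unfolding noz_def using last_in_set by fastforce

lemma tadd_noz: "noz xs \<Longrightarrow> d \<noteq> w0 \<Longrightarrow> tadd (T xs) d = T (xs @ [(T [], d)])"
proof -
  assume a: "noz xs" "d \<noteq> w0"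
  have c: "\<not> (xs \<noteq> [] \<and> fst (last xs) = T [])" using noz_last[OF a(1)] by blast
  show ?thesis by (simp only: tadd_form[OF a(2)] if_not_P[OF c])
qed

lemma lt_same_prefix: "lt (T (xs @ ys)) (T (xs @ zs)) = lt (T ys) (T zs)"
  by (induction xs) (auto simp: lt_irrefl)

lemma fs_append: "fs (T (xs @ [p])) \<theta> = T (xs @ untm (fs (T [p]) \<theta>))"
proof (induction xs)
  case Nil then show ?case by simp
next
  case (Cons q xs)
  obtain y ys where yy: "xs @ [p] = y # ys" by (cases "xs @ [p]") auto
  obtain a b where q: "q = (a, b)" by (cases q)
  have "fs (T ((q # xs) @ [p])) \<theta> = T (q # untm (fs (T (xs @ [p])) \<theta>))"
    using yy q by (simp only: append_Cons fs_multi)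
  then show ?case using Cons by simp
qed

lemma Theta_limit:
  assumes o: "omega1_like TYPE('w::wellorder)" and cl: "club X"
    and nfy: "nf y" and y: "y = T ((e, f) # r)" "e \<noteq> T []" and c: "(c::'w) < Theta X y"
  shows "wsucc c < Theta X y"
proof -
  have "lt (cw c) y" using y unfolding cw_def by (auto simp: lt_nil_left)
  moreover have "star (cw c) < Theta X y" using c star_cw[of c] by simp
  ultimately have "Theta X (cw c) < Theta X y" using Theta_props(3)[OF o cl nfy] cw_nf by blast
  moreover have "c < Theta X (cw c)" using Theta_props(2)[OF o cl cw_nf] star_cw by metis
  ultimately show ?thesis using wsucc_le[of c "Theta X (cw c)"] by simp
qed

lemma tadd_alpha:
  assumes "noz as"
  shows "tadd (T as) \<gamma> = (if \<gamma> = w0 then T as else T (as @ [(T [], \<gamma>)]))"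
  using tadd_noz[OF assms] by simp

lemma nf_tadd_alpha:
  assumes "noz as" "as \<noteq> []" "nf (T as)"
  shows "nf (tadd (T as) \<gamma>)"
  using assms noz_last[OF assms(1,2)] tadd_alpha[OF assms(1)]
  by (auto intro!: nf_snoc simp: lt_nil_left)

lemma Cs_tadd_alpha:
  assumes "noz as"
  shows "Cs (tadd (T as) \<gamma>) = Cs (T as) \<union> {\<gamma>}"
  using tadd_alpha[OF assms] w0_Cs[of "T as"] by (auto simp: Cs_append)

lemma classify:
  assumes "noz as" "nf z" "lt z (tadd (T as) \<beta>)" "\<not> lt z (T as)"
  shows "\<exists>\<gamma><\<beta>. z = tadd (T as) \<gamma>"
proof (cases "\<beta> = w0")
  case True then show ?thesis using assms tadd_alpha by simp
next
  case False
  obtain zs where z: "z = T zs" by (cases z)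
  have "lt (T zs) (T (as @ [(T [], \<beta>)]))" using assms(3) False tadd_alpha[OF assms(1)] z by simp
  then obtain rest where r: "zs = as @ rest" "lt (T rest) (T [(T [], \<beta>)])"
    using lt_append_cases assms(4) z by blast
  show ?thesis
  proof (cases rest)
    case Nil
    have "w0 < \<beta>" using False w0_le[of \<beta>] by (simp add: le_less)
    then show ?thesis using r z False tadd_alpha[OF assms(1)] Nil by (intro exI[of _ w0]) auto
  next
    case (Cons q r')
    obtain c e where q: "q = (c, e)" by (cases q)
    have ce: "c = T []" "e < \<beta>" using r(2) Cons q by auto
    have "r' = []" using assms(2) z r Cons q ce nf_zero_last by blast
    moreover have "e \<noteq> w0" using assms(2) z r Cons q nf_elems[of zs c e] by auto
    ultimately show ?thesis using z r Cons q ce tadd_alpha[OF assms(1)] by (intro exI[of _ e]) auto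
  qed
qed

lemma tsucc_analysis:
  assumes o: "omega1_like TYPE('w::wellorder)" and noz: "noz as" and ne: "as \<noteq> []"
    and nfz: "nf z0" and eq: "tadd (T as) \<beta> = tadd z0 (w1::'w)"
  shows "\<exists>\<gamma>. \<beta> = wsucc \<gamma> \<and> z0 = tadd (T as) \<gamma>"
proof -
  obtain zs where z: "z0 = T zs" by (cases z0)
  have w1n: "w1 \<noteq> (w0::'w)" by (rule w1_ne_w0[OF o])
  have lastas: "fst (last as) \<noteq> T []" by (rule noz_last[OF noz ne])
  show ?thesis
  proof (cases "zs \<noteq> [] \<and> fst (last zs) = T []")
    case True
    let ?c = "snd (last zs)"
    have zs: "zs = butlast zs @ [(T [], ?c)]" using True by (metis append_butlast_last_id prod.collapse)
    have rhs: "tadd z0 w1 = T (butlast zs @ [(T [], wsucc ?c)])"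
      using True z w1n by (simp add: tadd_form wadd_w1[OF o])
    show ?thesis
    proof (cases "\<beta> = w0")
      case True
      then have "as = butlast zs @ [(T [], wsucc ?c)]" using eq rhs by simp
      then show ?thesis using lastas by simp
    next
      case False
      then have "as @ [(T [], \<beta>)] = butlast zs @ [(T [], wsucc ?c)]"
        using eq rhs tadd_alpha[OF noz] by simp
      then have "as = butlast zs" "\<beta> = wsucc ?c" by auto
      moreover have "?c \<noteq> w0" using nfz z True nf_elems[of zs "T []" ?c]
        by (metis last_in_set prod.collapse)
      ultimately show ?thesis using zs z tadd_alpha[OF noz] by (intro exI[of _ ?c]) auto
    qed
  next
    case False
    have rhs: "tadd z0 w1 = T (zs @ [(T [], w1)])" unfolding z tadd_form[OF w1n] if_not_P[OF False] ..
    show ?thesis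
    proof (cases "\<beta> = w0")
      case True
      then have "as = zs @ [(T [], w1)]" using eq rhs by simp
      then show ?thesis using lastas by simp
    next
      case False
      then have "as @ [(T [], \<beta>)] = zs @ [(T [], w1)]"
        using eq rhs tadd_alpha[OF noz] by simp
      then show ?thesis using z unfolding w1_def by (intro exI[of _ w0]) auto
    qed
  qed
qed

lemma tadd_succ:
  assumes o: "omega1_like TYPE('w::wellorder)" and noz: "noz as"
  shows "tadd (tadd (T as) \<gamma>) w1 = tadd (T as) (wsucc (\<gamma>::'w))"
proof -
  have w1n: "w1 \<noteq> (w0::'w)" by (rule w1_ne_w0[OF o])
  have sn: "wsucc \<gamma> \<noteq> w0" using wsucc_gt[OF o, of \<gamma>] by (metis not_less_w0)
  show ?thesis
  proof (cases "\<gamma> = w0")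
    case True
    then show ?thesis using tadd_alpha[OF noz] tadd_noz[OF noz w1n] sn unfolding w1_def by simp
  next
    case False
    then show ?thesis using tadd_alpha[OF noz] sn w1n by (simp add: tadd_form wadd_w1[OF o])
  qed
qed


lemma lt_tadd_alpha:
  assumes "noz as" "\<gamma> < \<beta>"
  shows "lt (tadd (T as) \<gamma>) (tadd (T as) \<beta>)"
proof -
  have b: "\<beta> \<noteq> w0" using assms(2) by (metis not_less_w0)
  show ?thesis
  proof (cases "\<gamma> = w0")
    case True
    then show ?thesis using tadd_alpha[OF assms(1)] b lt_prefix by simp
  next
    case False
    then show ?thesis using tadd_alpha[OF assms(1)] b assms(2) lt_same_prefix[of as] by simp
  qed
qed

lemma KD:
  assumes o: "omega1_like TYPE('w::wellorder)" and cl: "club X" and w0X: "w0 \<notin> X"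
    and nfa: "nf (T as)" and ne: "as \<noteq> []" and noz: "noz as" and pth: "path (\<tau>::'w) (T as)"
    and J: "tadd (T as) \<beta> \<in> JUMP X"
  shows "ThetaStar X (tadd (T as) \<beta>) \<noteq> w0"
    "star (tadd (T as) \<beta>) \<le> ThetaStar X (tadd (T as) \<beta>)"
    "ThetaStar X (tadd (T as) \<beta>) < Theta X (tadd (T as) \<beta>)"
    "\<forall>z. nf z \<and> lt z (tadd (T as) \<beta>) \<and> \<not> lt z (T as) \<longrightarrow> Theta X z \<le> ThetaStar X (tadd (T as) \<beta>)"
proof -
  define \<xi> where "\<xi> = tadd (T as) \<beta>"
  define d where "d = ThetaStar X \<xi>"
  have nfxi: "nf \<xi>" unfolding \<xi>_def by (rule nf_tadd_alpha[OF noz ne nfa])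
  have tauin: "\<tau> \<in> Cs (T as)" by (rule path_tau_in[OF o pth])
  have w1t: "w1 < \<tau>" using pth unfolding path_def by simp
  have w0t: "w0 < \<tau>" using w0_less_w1[OF o] w1t by (rule less_trans)
  have sa: "\<tau> \<le> star (T as)" using tauin by (rule Cs_le_star)
  have CsXi: "Cs \<xi> = Cs (T as) \<union> {\<beta>}" unfolding \<xi>_def by (rule Cs_tadd_alpha[OF noz])
  have Csz: "\<And>\<gamma>. Cs (tadd (T as) \<gamma>) = Cs (T as) \<union> {\<gamma>}" by (rule Cs_tadd_alpha[OF noz])
  have saxi: "star (T as) \<le> star \<xi>" using CsXi by (intro star_mono) auto
  have bxi: "\<beta> \<le> star \<xi>" using CsXi by (intro Cs_le_star) auto
  have Jx: "tsucc \<xi> \<or> \<xi> \<in> FIX X" using J unfolding \<xi>_def JUMP_def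
    using tadd_alpha[OF noz, of \<beta>] ne by (auto split: if_splits)
  have "d \<noteq> w0 \<and> star \<xi> \<le> d \<and> d < Theta X \<xi> \<and>
        (\<forall>z. nf z \<and> lt z \<xi> \<and> \<not> lt z (T as) \<longrightarrow> Theta X z \<le> d)"
  proof (cases "tsucc \<xi>")
    case True
    then obtain z0 where z0: "nf z0" "\<xi> = tadd z0 w1" unfolding tsucc_def by blast
    then obtain \<gamma>0 where g0: "\<beta> = wsucc \<gamma>0" "z0 = tadd (T as) \<gamma>0"
      using tsucc_analysis[OF o noz ne] unfolding \<xi>_def by blast
    have "tpred \<xi> = z0" unfolding tpred_def
    proof (rule the_equality)
      show "nf z0 \<and> \<xi> = tadd z0 w1" using z0 by blast
    next
      fix z assume "nf z \<and> \<xi> = tadd z w1"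
      then obtain \<gamma> where "\<beta> = wsucc \<gamma>" "z = tadd (T as) \<gamma>"
        using tsucc_analysis[OF o noz ne] unfolding \<xi>_def by blast
      then show "z = z0" using g0 wsucc_inj[OF o] by simp
    qed
    then have dd: "d = Theta X z0" unfolding d_def ThetaStar_def using True by simp
    note P0 = Theta_props[OF o cl z0(1)]
    have dX: "d \<noteq> w0" using P0(1) w0X dd by auto
    have s0: "star z0 < d" using P0(2) dd by simp
    have s0': "\<forall>c\<in>Cs z0. c < d" using s0 star_less_iff by blast
    have csa: "\<forall>c\<in>Cs (T as). c < d" using s0' Csz g0(2) by auto
    have g0d: "\<gamma>0 < d" using s0' Csz g0(2) by auto
    have bd: "\<beta> \<le> d" using g0(1) g0d by (simp add: wsucc_le)
    have K2: "star \<xi> \<le> d" unfolding star_le_iff CsXi using csa bd by (auto intro: less_imp_le)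
    have gb: "\<gamma>0 < \<beta>" using g0(1) wsucc_gt[OF o] by simp
    have ltz0: "lt z0 \<xi>" unfolding g0(2) \<xi>_def by (rule lt_tadd_alpha[OF noz gb])
    have "star z0 \<le> star \<xi>" unfolding star_le_iff g0(2) Csz
      using saxi bxi gb Cs_le_star[of _ "T as"] by (auto intro: order_trans less_imp_le)
    then have "star z0 < Theta X \<xi>" using Theta_props(2)[OF o cl nfxi] by simp
    then have K3: "d < Theta X \<xi>" using Theta_props(3)[OF o cl nfxi] ltz0 z0(1) dd by blast
    have K4: "\<forall>z. nf z \<and> lt z \<xi> \<and> \<not> lt z (T as) \<longrightarrow> Theta X z \<le> d"
    proof (intro allI impI)
      fix z assume z: "nf z \<and> lt z \<xi> \<and> \<not> lt z (T as)"
      then obtain \<gamma> where g: "\<gamma> < \<beta>" "z = tadd (T as) \<gamma>" using classify[OF noz] unfolding \<xi>_def by blast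
      then have "\<gamma> \<le> \<gamma>0" using g0(1) less_wsucc_iff[OF o] by simp
      show "Theta X z \<le> d"
      proof (cases "\<gamma> = \<gamma>0")
        case True then show ?thesis using g g0 dd by simp
      next
        case False
        then have gg: "\<gamma> < \<gamma>0" using \<open>\<gamma> \<le> \<gamma>0\<close> by simp
        have "lt z z0" unfolding g(2) g0(2) by (rule lt_tadd_alpha[OF noz gg])
        moreover have "star z < Theta X z0" unfolding star_less_iff g(2) Csz
          using csa gg g0d dd by auto
        ultimately show ?thesis using P0(3) z dd by (auto intro: less_imp_le)
      qed
    qed
    show ?thesis using dX K2 K3 K4 by blast
  next
    case False
    then have FX: "\<xi> \<in> FIX X" using Jx by blast
    then have F: "star (fs \<xi> w1) < star \<xi>" "tau \<xi> = cw (star \<xi>)"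
      "\<exists>g. nf g \<and> lt \<xi> g \<and> Theta X g = star \<xi>" unfolding FIX_def by auto
    have dd: "d = star \<xi>" unfolding d_def ThetaStar_def using False FX F(2) to_w_cw by simp
    have dX: "d \<noteq> w0" using dd sa saxi w0t by (metis not_less_w0 order.strict_trans2)
    have K3: "d < Theta X \<xi>" using Theta_props(2)[OF o cl nfxi] dd by simp
    have K4: "\<forall>z. nf z \<and> lt z \<xi> \<and> \<not> lt z (T as) \<longrightarrow> Theta X z \<le> d"
    proof (intro allI impI)
      fix z assume z: "nf z \<and> lt z \<xi> \<and> \<not> lt z (T as)"
      then obtain \<gamma> where g: "\<gamma> < \<beta>" "z = tadd (T as) \<gamma>" using classify[OF noz] unfolding \<xi>_def by blast
      have bn: "\<beta> \<noteq> w0" using g(1) by (metis not_less_w0)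
      have "\<not> (\<exists>c. \<beta> = wsucc c)"
      proof
        assume "\<exists>c. \<beta> = wsucc c"
        then obtain c where c: "\<beta> = wsucc c" by blast
        have "\<xi> = tadd (tadd (T as) c) w1" unfolding \<xi>_def c by (rule tadd_succ[OF o noz, symmetric])
        then have "tsucc \<xi>" unfolding tsucc_def using nf_tadd_alpha[OF noz ne nfa] by blast
        then show False using False by simp
      qed
      then have lim: "wlimit \<beta>" using bn unfolding wlimit_def by blast
      have xi: "\<xi> = T (as @ [(T [], \<beta>)])" unfolding \<xi>_def using tadd_alpha[OF noz] bn by simp
      have "fs \<xi> w1 = T (as @ [(T [], w1)])"
        unfolding xi fs_append using lim w1_ne_w0[OF o] by (simp add: mono_def)
      then have "star (T as) \<le> star (fs \<xi> w1)" by (intro star_mono) (auto simp: Cs_append)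
      then have sal: "star (T as) < star \<xi>" using F(1) by simp
      obtain g where gg: "nf g" "lt \<xi> g" "Theta X g = star \<xi>" using F(3) by blast
      have "lt z g" using z gg(2) lt_trans by blast
      moreover have "star z < Theta X g" unfolding gg(3) star_less_iff g(2) Csz
        using sal bxi g(1) Cs_le_star[of _ "T as"] by (auto intro: le_less_trans less_le_trans)
      ultimately have "Theta X z < Theta X g" using Theta_props(3)[OF o cl gg(1)] z by blast
      then show "Theta X z \<le> d" using gg(3) dd by simp
    qed
    show ?thesis using dX dd K3 K4 by simp
  qed
  then show "ThetaStar X (tadd (T as) \<beta>) \<noteq> w0"
    "star (tadd (T as) \<beta>) \<le> ThetaStar X (tadd (T as) \<beta>)"
    "ThetaStar X (tadd (T as) \<beta>) < Theta X (tadd (T as) \<beta>)"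
    "\<forall>z. nf z \<and> lt z (tadd (T as) \<beta>) \<and> \<not> lt z (T as) \<longrightarrow> Theta X z \<le> ThetaStar X (tadd (T as) \<beta>)"
    unfolding \<xi>_def d_def by blast+
qed


lemma EF:
  assumes o: "omega1_like TYPE('w::wellorder)" and nfy: "nf (T ys)"
    and FN: "\<forall>(e, c)\<in>set ys. e = T [] \<longrightarrow> \<theta> = w0 \<and> c = w1" and dn: "(d::'w) \<noteq> w0"
  shows "nf (tadd (T ys) d)"
    "Cs (tadd (T ys) d) \<subseteq> Cs (T ys) \<union> {d, wadd w1 d, w0}"
    "\<forall>ys'. noz ys' \<longrightarrow> lt (T ys) (T ys') \<longrightarrow> lt (tadd (T ys) d) (T ys')"
    "\<theta> \<noteq> w0 \<Longrightarrow> tadd (T ys) d = T (ys @ [(T [], d)]) \<and> noz ys"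
proof -
  have wa: "wadd w1 d \<noteq> w0" using wadd_w1_left_props(1)[OF o] .
  have "nf (tadd (T ys) d) \<and> Cs (tadd (T ys) d) \<subseteq> Cs (T ys) \<union> {d, wadd w1 d, w0} \<and>
    (\<forall>ys'. noz ys' \<longrightarrow> lt (T ys) (T ys') \<longrightarrow> lt (tadd (T ys) d) (T ys'))"
  proof (cases "ys \<noteq> [] \<and> fst (last ys) = T []")
    case True
    have "last ys \<in> set ys" using True by simp
    then have l: "last ys = (T [], w1)" using FN True by (metis (mono_tags, lifting) case_prodD prod.collapse)
    have ys: "ys = butlast ys @ [(T [], w1)]" using True l by (metis append_butlast_last_id)
    have td: "tadd (T ys) d = T (butlast ys @ [(T [], wadd w1 d)])"
      using True l by (simp add: tadd_form[OF dn])
    have "nf (T (butlast ys @ [(T [], wadd w1 d)]))"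
      using nfy ys wa nf_change_last by metis
    moreover have "Cs (T (butlast ys @ [(T [], wadd w1 d)])) \<subseteq> Cs (T ys) \<union> {d, wadd w1 d, w0}"
    proof -
      from ys have "Cs (T ys) = Cs (T (butlast ys @ [(T [], w1)]))"
        by (rule arg_cong[where f="\<lambda>l. Cs (T l)"])
      then have "Cs (T (butlast ys)) \<subseteq> Cs (T ys)" using Cs_append[of "butlast ys" "[(T [], w1)]"] by blast
      moreover have "Cs (T (butlast ys @ [(T [], wadd w1 d)])) = Cs (T (butlast ys)) \<union> {w0, wadd w1 d}"
        using Cs_append[of "butlast ys" "[(T [], wadd w1 d)]"] by auto
      ultimately show ?thesis by blast
    qed
    moreover have "\<forall>ys'. noz ys' \<longrightarrow> lt (T ys) (T ys') \<longrightarrow> lt (T (butlast ys @ [(T [], wadd w1 d)])) (T ys')"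
      using ys lt_change_last by metis
    ultimately show ?thesis using td by simp
  next
    case False
    have td: "tadd (T ys) d = T (ys @ [(T [], d)])"
      unfolding tadd_form[OF dn] if_not_P[OF False] ..
    have "nf (T (ys @ [(T [], d)]))"
      using nfy False dn by (intro nf_snoc) (auto simp: lt_nil_left)
    moreover have "Cs (T (ys @ [(T [], d)])) \<subseteq> Cs (T ys) \<union> {d, wadd w1 d, w0}"
      by (auto simp: Cs_append)
    moreover have "\<forall>ys'. noz ys' \<longrightarrow> lt (T ys) (T ys') \<longrightarrow> lt (T (ys @ [(T [], d)])) (T ys')"
      using lt_append_last by blast
    ultimately show ?thesis using td by simp
  qed
  then show "nf (tadd (T ys) d)"
    "Cs (tadd (T ys) d) \<subseteq> Cs (T ys) \<union> {d, wadd w1 d, w0}"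
    "\<forall>ys'. noz ys' \<longrightarrow> lt (T ys) (T ys') \<longrightarrow> lt (tadd (T ys) d) (T ys')" by blast+
  assume tn: "\<theta> \<noteq> w0"
  have nz: "noz ys" unfolding noz_def using FN tn by auto
  then show "tadd (T ys) d = T (ys @ [(T [], d)]) \<and> noz ys" using tadd_noz dn by blast
qed

theorem lemma4p6:
  fixes X :: "'w::wellorder set" and \<alpha> :: "'w tm" and \<beta> \<tau> :: 'w and t :: "nat \<Rightarrow> 'w"
  assumes "omega1_like TYPE('w)"
    and "club X" and "w0 \<notin> X"
    and "nf \<alpha>" and "\<alpha> \<noteq> T []" and "\<forall>(a, b) \<in> set (untm \<alpha>). a \<noteq> T []"
    and "tau \<alpha> = cw \<tau>"
    and "tadd \<alpha> \<beta> \<in> hatEps X \<inter> JUMP X"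
    and "strict_mono t" and "wsup (range t) = \<tau>"
  shows "strict_mono (\<lambda>n. Theta X (tadd (fs \<alpha> (t n)) (ThetaStar X (tadd \<alpha> \<beta>))))
       \<and> wsup (range (\<lambda>n. Theta X (tadd (fs \<alpha> (t n)) (ThetaStar X (tadd \<alpha> \<beta>)))))
           = Theta X (tadd \<alpha> \<beta>)"
proof -
  note o = assms(1) and cl = assms(2) and w0X = assms(3)
  obtain as where al: "\<alpha> = T as" by (cases \<alpha>)
  have ne: "as \<noteq> []" using assms(5) al by simp
  have noz: "noz as" using assms(6) al unfolding noz_def by simp
  have nfa: "nf (T as)" using assms(4) al by simp
  have sm: "strict_mono t" by (rule assms(9))
  note St = wsup_seq[OF o sm, unfolded assms(10)]
  have tlt: "\<And>n. t n < \<tau>" using St(1) by blast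
  have tS: "\<And>n. t n < t (Suc n)" using sm by (simp add: strict_mono_def)
  have tSn: "\<And>n. t (Suc n) \<noteq> w0" using tS by (metis not_less_w0)
  have w1t: "w1 < \<tau>" using tSn[of 0] w1_le_iff[OF o] tlt[of 1] by (metis One_nat_def le_less_trans)
  have pth: "path \<tau> (T as)" unfolding path_def using nfa ne assms(7) al w1t by simp
  have J: "tadd (T as) \<beta> \<in> JUMP X" using assms(8) al by simp
  define \<xi> where "\<xi> = tadd (T as) \<beta>"
  define d where "d = ThetaStar X \<xi>"
  note K = KD[OF o cl w0X nfa ne noz pth J, folded \<xi>_def d_def]
  have nfxi: "nf \<xi>" unfolding \<xi>_def by (rule nf_tadd_alpha[OF noz ne nfa])
  note Pxi = Theta_props[OF o cl nfxi]
  have sa_xi: "star (T as) \<le> star \<xi>" using Cs_tadd_alpha[OF noz, of \<beta>] unfolding \<xi>_def by (intro star_mono) auto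
  have tau_sa: "\<tau> \<le> star (T as)" using path_tau_in[OF o pth] by (rule Cs_le_star)
  obtain q r where asq: "as = q # r" using ne by (cases as) auto
  obtain h1 h2 where q: "q = (h1, h2)" by (cases q)
  have h1: "h1 \<noteq> T []" using noz asq q unfolding noz_def by auto
  have xi_head: "\<xi> = T ((h1, h2) # (if \<beta> = w0 then r else r @ [(T [], \<beta>)]))"
  proof -
    have "\<xi> = (if \<beta> = w0 then T as else T (as @ [(T [], \<beta>)]))" unfolding \<xi>_def by (rule tadd_alpha[OF noz])
    then show ?thesis using asq q by simp
  qed
  have alpha_xi: "lt (T as) \<xi> \<or> T as = \<xi>"
    unfolding \<xi>_def tadd_alpha[OF noz] using lt_prefix by auto
  define F where "F n = fs (T as) (t n)" for n
  define ys where "ys n = untm (F n)" for n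
  define e where "e n = tadd (F n) d" for n
  define u where "u n = Theta X (e n)" for n
  have Fys: "F n = T (ys n)" for n unfolding ys_def by simp
  have FB: "nf (F n)" "lt (F n) (T as)" for n using FS_basic[OF o pth tlt[of n]] unfolding F_def by blast+
  have FN: "\<forall>(e, c)\<in>set (ys n). e = T [] \<longrightarrow> t n = w0 \<and> c = w1" for n
    using FS_noz[OF o pth] noz unfolding ys_def F_def by simp
  have FC: "\<forall>c\<in>Cs (F n). c \<le> star (T as) \<or> c = t n" for n
    using FS_Cs[OF o pth] unfolding F_def by blast
  note E = EF[OF o _ FN K(1)]
  have e_nf: "nf (e n)" for n using E(1) FB(1) Fys unfolding e_def by metis
  have e_Cs: "Cs (e n) \<subseteq> Cs (F n) \<union> {d, wadd w1 d, w0}" for n using E(2) FB(1) Fys unfolding e_def by metis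
  have e_lt: "noz ys' \<Longrightarrow> lt (F n) (T ys') \<Longrightarrow> lt (e n) (T ys')" for n ys'
    using E(3) FB(1) Fys unfolding e_def by metis
  have e_S: "e (Suc n) = T (ys (Suc n) @ [(T [], d)]) \<and> noz (ys (Suc n)) \<and> ys (Suc n) \<noteq> []" for n
  proof -
    have "e (Suc n) = T (ys (Suc n) @ [(T [], d)]) \<and> noz (ys (Suc n))"
      using E(4)[OF FB(1)[of "Suc n", unfolded Fys] tSn[of n]] unfolding e_def Fys .
    moreover have "ys (Suc n) \<noteq> []" using FS_ne[OF o pth tSn[of n]] unfolding ys_def F_def by (metis T_untm)
    ultimately show ?thesis by blast
  qed
  have e_head: "\<exists>h1 h2 r. e (Suc n) = T ((h1, h2) # r) \<and> h1 \<noteq> T []" for n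
  proof -
    obtain q r where yq: "ys (Suc n) = q # r" using e_S[of n] by (cases "ys (Suc n)") auto
    obtain a b where q: "q = (a, b)" by (cases q)
    have "a \<noteq> T []" using e_S[of n] yq q unfolding noz_def by auto
    then show ?thesis using e_S[of n] yq q by auto
  qed
  have d_in: "d \<in> Cs (e (Suc n))" for n using e_S[of n] by (auto simp: Cs_append)
  have t_in: "t (Suc n) \<in> Cs (e (Suc n))" for n
    using FS_theta[OF o pth tSn[of n]] e_S[of n] Fys unfolding F_def by (auto simp: Cs_append)
  have BND: "star (e n) < L" if bd: "d < L" "wsucc d < L" "t n < L" "star (T as) < L" for n L
  proof -
    have "c < L" if c: "c \<in> Cs (e n)" for c
    proof -
      have "c \<in> Cs (F n) \<or> c = d \<or> c = wadd w1 d \<or> c = w0" using c e_Cs by blast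
      moreover have "wadd w1 d < L" using wadd_w1_left_props(2)[OF o, of d] \<open>wsucc d < L\<close> by simp
      moreover have "w0 < L" using \<open>star (T as) < L\<close> w0_le[of "star (T as)"] by (rule le_less_trans[rotated])
      ultimately show ?thesis using FC[of n] bd by (auto intro: le_less_trans)
    qed
    then show ?thesis using star_less_iff by blast
  qed
  have u_step: "u n < u (Suc n)" for n
  proof -
    let ?L = "u (Suc n)"
    note P = Theta_props[OF o cl e_nf[of "Suc n"]]
    have dL: "d < ?L" using d_in[of n] Cs_le_star P(2) unfolding u_def by (blast intro: le_less_trans)
    obtain g1 g2 r where hd: "e (Suc n) = T ((g1, g2) # r)" "g1 \<noteq> T []" using e_head[of n] by blast
    have wdL: "wsucc d < ?L" unfolding u_def by (rule Theta_limit[OF o cl e_nf hd dL[unfolded u_def]])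
    have "t (Suc n) < ?L" using t_in[of n] Cs_le_star P(2) unfolding u_def by (blast intro: le_less_trans)
    then have tL: "t n < ?L" using tS[of n] by simp
    have sL: "star (T as) < ?L" using sa_xi K(2) dL by simp
    have "star (e n) < ?L" using BND dL wdL tL sL by blast
    moreover have "lt (e n) (e (Suc n))"
    proof -
      have "lt (F n) (T (ys (Suc n)))" using FS_mono[OF o pth tS[of n]] Fys unfolding F_def by metis
      then have "lt (e n) (T (ys (Suc n)))" using e_lt e_S by blast
      moreover have "lt (T (ys (Suc n))) (e (Suc n))" using e_S[of n] lt_prefix by simp
      ultimately show ?thesis by (rule lt_trans)
    qed
    ultimately show ?thesis using P(3) e_nf unfolding u_def by blast
  qed
  have smu: "strict_mono u" unfolding strict_mono_Suc_iff using u_step by blast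
  have u_xi: "u n < Theta X \<xi>" for n
  proof -
    have dL: "d < Theta X \<xi>" by (rule K(3))
    have wdL: "wsucc d < Theta X \<xi>" by (rule Theta_limit[OF o cl nfxi xi_head h1 dL])
    have sL: "star (T as) < Theta X \<xi>" using sa_xi Pxi(2) by simp
    have tL: "t n < Theta X \<xi>" using tlt[of n] tau_sa sL by simp
    have "star (e n) < Theta X \<xi>" using BND dL wdL tL sL by blast
    moreover have "lt (e n) \<xi>"
    proof -
      have "lt (e n) (T as)" using e_lt[OF noz FB(2)] .
      then show ?thesis using alpha_xi lt_trans by blast
    qed
    ultimately show ?thesis using Pxi(3) e_nf unfolding u_def by blast
  qed
  note Su = wsup_seq[OF o smu]
  let ?s = "wsup (range u)"
  have d_u1: "d < u 1"
    using d_in[of 0] Cs_le_star Theta_props(2)[OF o cl e_nf[of 1]] unfolding u_def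
    by (metis One_nat_def le_less_trans)
  have le1: "?s \<le> Theta X \<xi>" using Su(4) u_xi by (auto intro: less_imp_le)
  have le2: "Theta X \<xi> \<le> ?s"
  proof (rule Pxi(4))
    show "?s \<in> X"
    proof -
      have "\<forall>b<?s. \<exists>x\<in>X. b < x \<and> x < ?s"
      proof (intro allI impI)
        fix b assume "b < ?s"
        then obtain n where "b < u n" using Su(2) by blast
        moreover have "u n \<in> X" using Theta_props(1)[OF o cl e_nf] unfolding u_def by blast
        ultimately show "\<exists>x\<in>X. b < x \<and> x < ?s" using Su(1) by blast
      qed
      then show ?thesis using cl Su(3) unfolding club_def by blast
    qed
    show "star \<xi> < ?s" using K(2) d_u1 Su(1) by (meson le_less_trans less_trans)
    show "\<forall>z. nf z \<and> lt z \<xi> \<and> star z < ?s \<longrightarrow> Theta X z < ?s"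
    proof (intro allI impI)
      fix z assume z: "nf z \<and> lt z \<xi> \<and> star z < ?s"
      show "Theta X z < ?s"
      proof (cases "lt z (T as)")
        case False
        then have "Theta X z \<le> d" using K(4) z by blast
        then show ?thesis using d_u1 Su(1) by (meson le_less_trans less_trans)
      next
        case True
        obtain \<theta>0 where th: "\<theta>0 < \<tau>" "lt z (fs (T as) \<theta>0)" using FS_cof[OF o pth] z True by blast
        obtain m where m: "\<theta>0 < t m" using St(2) th(1) by blast
        obtain k where k: "star z < u k" using Su(2) z by blast
        define j where "j = Suc (max m k)"
        have "t m \<le> t j" unfolding j_def using strict_mono_less_eq[OF sm] by simp
        then have tj: "\<theta>0 < t j" using m by simp
        have "u k \<le> u j" unfolding j_def using strict_mono_less_eq[OF smu] by simp
        then have szj: "star z < u j" using k by simp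
        have "lt (fs (T as) \<theta>0) (F j)" unfolding F_def by (rule FS_mono[OF o pth tj])
        then have "lt z (F j)" using th(2) lt_trans by blast
        then have "lt z (e j)" using e_S[of "max m k"] Fys lt_append_right unfolding j_def by metis
        then have "Theta X z < u j" using Theta_props(3)[OF o cl e_nf[of j]] z szj unfolding u_def by blast
        then show ?thesis using Su(1) by (meson less_trans)
      qed
    qed
  qed
  have "strict_mono u \<and> ?s = Theta X \<xi>" using smu le1 le2 by simp
  then show ?thesis unfolding u_def e_def F_def d_def \<xi>_def al by simp
qed


end
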